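(* Run the algorithm GBGC (described in the context) on input $(\mathbf e_1,f_1),\dots,(\mathbf e_m,f_m)$, with an arbitrary rule for choosing which critical pair to process next and arbitrary choices of reducers during reduction. Suppose the strict partial orders $<$ on $G$ used in the generalized rewritable criterion are admissible, and suppose the algorithm terminates. Then the returned set $G$ is an S-Gröbner basis for $\mathbf M=\langle(\mathbf e_1,f_1),\dots,(\mathbf e_m,f_m)\rangle$ (and hence $\{g:(\mathbf v,g)\in G\}$ is a Gröbner basis of $\langle f_1,\dots,f_m\rangle$ w.r.t. the term order on $R$).
   Context: Setting: $R=K[x_1,\dots,x_n]$ over a field $K$, $f_1,\dots,f_m\in R$, $\mathbf f=(f_1,\dots,f_m)$, $\mathbf e_i$ the $i$-th unit vector of $R^m$, $\mathbf M=\{(\mathbf u,f)\in R^m\times R:\mathbf u\cdot\mathbf f=f\}$. Fix an arbitrary term order $\prec$ on power products of $R$ and an arbitrary term order $\prec$ on terms $x^\alpha\mathbf e_i$ of $R^m$ (not necessarily related). $\mathrm{lpp}$ = leading power product (leading term for vectors), $\mathrm{lc}$ = leading coefficient; $\mathrm{lpp}(0)=0$ is below every nonzero power product/term. $\mathrm{lpp}(\mathbf u)$ is called the signature of $(\mathbf u,f)$. Critical pairs: for $(\mathbf u,f),(\mathbf v,g)\in\mathbf M$ with $f,g\ne0$, $t=\mathrm{lcm}(\mathrm{lpp}(f),\mathrm{lpp}(g))$, $t_f=t/\mathrm{lpp}(f)$, $t_g=t/\mathrm{lpp}(g)$; if $\mathrm{lpp}(t_f\mathbf u)\succeq\mathrm{lpp}(t_g\mathbf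 v)$ then $[t_f(\mathbf u,f),t_g(\mathbf v,g)]$ is a critical pair of $(\mathbf u,f)$ and $(\mathbf v,g)$, with S-polynomial $t_f(\mathbf u,f)-c\,t_g(\mathbf v,g)=(t_f\mathbf u-ct_g\mathbf v,\,t_ff-ct_gg)$, $c=\mathrm{lc}(f)/\mathrm{lc}(g)$. It is called regular if $\mathrm{lpp}(t_f\mathbf u)\succ\mathrm{lpp}(t_g\mathbf v)$. Generalized rewritable criterion: given a finite $B\subset\mathbf M$ with a strict partial order $<$ on $B$, a multiple $t(\mathbf u,f)$ with $(\mathbf u,f)\in B$, $f\ne0$, $t$ a power product, is gen-rewritable by $B$ if there is $(\mathbf u',f')\in B$ with $\mathrm{lpp}(\mathbf u')\mid\mathrm{lpp}(t\mathbf u)$ and $(\mathbf u',f')<(\mathbf u,f)$. A critical pair $[t_f(\mathbf u,f),t_g(\mathbf v,g)]$ is gen-rewritable by $B$ if $t_f(\mathbf u,f)$ or $t_g(\mathbf v,g)$ is. Reduction: $(\mathbf u,f)$ is reducible by $B$ if there is $(\mathbf v,g)\in B$, $g\ne0$, with $\mathrm{lpp}(g)\mid\mathrm{lpp}(f)$ and $\mathrm{lpp}(\mathbf u-ct\mathbf v)=\mathrm{lpp}(\mathbf u)$, where $c=\mathrm{lc}(f)/\mathrm{lc}(g)$, $t=\mathrm{lpp}(f)/\mathrm{lpp}(g)$; it then one-step reduces to $(\mathbf u-ct\mathbf v,f-ctg)$. "Reduce by $B$" means repeating one-step reductions until the element is no longer reducible by $B$. Algorithm GBGC. Initialize $G=\{(\mathbf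 e_i,f_i):1\le i\le m\}$ and CPairs = set of all critical pairs of elements of this $G$; then add $(f_j\mathbf e_i-f_i\mathbf e_j,0)$ to $G$ for all $1\le i<j\le m$. While CPairs is nonempty: choose any critical pair $[t_f(\mathbf u,f),t_g(\mathbf v,g)]$ in CPairs and remove it; if it is regular and not gen-rewritable by the current $G$, then reduce its S-polynomial by the current $G$ to obtain $(\mathbf w,h)$; if $h\ne0$, add to CPairs the critical pair of $(\mathbf w,h)$ and $(\mathbf w',h')$ for every $(\mathbf w',h')\in G$ with $h'\ne0$, and add $(h\mathbf e_i-f_i\mathbf w,0)$ to $G$ for $i=1,\dots,m$; in either case add $(\mathbf w,h)$ to $G$. When CPairs is empty, return $G$. Throughout, $G$ carries a strict partial order $<$ that is updated whenever elements are added, in such a way that the order on the enlarged set restricts to the previous order on the old set. Admissibility: the partial orders are admissible if, for every critical pair $[t_f(\mathbf u,f),t_g(\mathbf v,g)]$ that, when selected from CPairs, is regular and not gen-rewritable by $G$, and whose S-polynomial is reduced to $(\mathbf w,h)$, one has $(\mathbf w,h)<(\mathbf u,f)$ in the updated order on $G\cup\{(\mathbf w,h)\}$. S-Gröbner basis: a finite $G\subset\mathbf M$ such that for every $(\mathbf u,f)\in\mathbf M$ (with $f\ne 0$) there is $(\mathbf v,g)\in G$ with $\mathrm{lpp}(g)\mid\mathrm{lpp}(f)$ and $\mathrm{lpp}(t\mathbf v)\preceq\mathrm{lpp}(\mathbf u)$, where $t=\mathrm{lpp}(f)/\mathrm{lpp}(g)$. *)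

theory Defs
  imports "HOL-Library.Poly_Mapping"
begin

text \<open>Power products in the variables of type 'v (n = CARD('v) variables) are
  finitely supported exponent maps 'v =>0 nat; polynomials of R = K[x_1..x_n] are
  finitely supported maps from power products to coefficients in the field K = 'a.
  Vectors of R^m are maps nat => polynomial, the components 0..m-1 being used
  (component i corresponds to the unit vector e_(i+1) of the paper).
  Terms of R^m are pairs (power product, component index).\<close>

type_synonym 'v pp = "'v \<Rightarrow>\<^sub>0 nat"
type_synonym ('v,'a) mpoly = "'v pp \<Rightarrow>\<^sub>0 'a"
type_synonym ('v,'a) vec = "nat \<Rightarrow> ('v,'a) mpoly"
type_synonym ('v,'a) elem = "('v,'a) vec \<times> ('v,'a) mpoly"

definition term_order :: "('v pp \<Rightarrow> 'v pp \<Rightarrow> bool) \<Rightarrow> bool" where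
  "term_order ord \<longleftrightarrow>
     (\<forall>s. \<not> ord s s) \<and>
     (\<forall>s t u. ord s t \<longrightarrow> ord t u \<longrightarrow> ord s u) \<and>
     (\<forall>s t. s \<noteq> t \<longrightarrow> ord s t \<or> ord t s) \<and>
     (\<forall>s t u. ord s t \<longrightarrow> ord (s + u) (t + u)) \<and>
     (\<forall>t. t \<noteq> 0 \<longrightarrow> ord 0 t)"

definition module_term_order :: "nat \<Rightarrow> ('v pp \<times> nat \<Rightarrow> 'v pp \<times> nat \<Rightarrow> bool) \<Rightarrow> bool" where
  "module_term_order m ord \<longleftrightarrow>
     (\<forall>s i. i < m \<longrightarrow> \<not> ord (s, i) (s, i)) \<and>
     (\<forall>s i t j u k. i < m \<longrightarrow> j < m \<longrightarrow> k < m \<longrightarrow>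
         ord (s, i) (t, j) \<longrightarrow> ord (t, j) (u, k) \<longrightarrow> ord (s, i) (u, k)) \<and>
     (\<forall>s i t j. i < m \<longrightarrow> j < m \<longrightarrow> (s, i) \<noteq> (t, j) \<longrightarrow>
         ord (s, i) (t, j) \<or> ord (t, j) (s, i)) \<and>
     (\<forall>s i t j u. i < m \<longrightarrow> j < m \<longrightarrow> ord (s, i) (t, j) \<longrightarrow> ord (s + u, i) (t + u, j)) \<and>
     (\<forall>t i u. i < m \<longrightarrow> u \<noteq> 0 \<longrightarrow> ord (t, i) (t + u, i))"

definition pp_dvd :: "'v pp \<Rightarrow> 'v pp \<Rightarrow> bool" where
  "pp_dvd s t \<longleftrightarrow> (\<forall>x. Poly_Mapping.lookup s x \<le> Poly_Mapping.lookup t x)"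

text \<open>lcm of power products (pointwise max, as s + (t - s) with truncated minus);
  the quotient t / s for s | t is t - s.\<close>
definition pp_lcm :: "'v pp \<Rightarrow> 'v pp \<Rightarrow> 'v pp" where
  "pp_lcm s t = s + (t - s)"

text \<open>Option-valued leading power products: None represents lpp(0) = 0,
  which lies below every nonzero power product/term.\<close>
definition opt_less :: "('b \<Rightarrow> 'b \<Rightarrow> bool) \<Rightarrow> 'b option \<Rightarrow> 'b option \<Rightarrow> bool" where
  "opt_less ord a b = (case (a, b) of
      (None, Some _) \<Rightarrow> True
    | (Some x, Some y) \<Rightarrow> ord x y
    | _ \<Rightarrow> False)"

definition opt_le :: "('b \<Rightarrow> 'b \<Rightarrow> bool) \<Rightarrow> 'b option \<Rightarrow> 'b option \<Rightarrow> bool" where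
  "opt_le ord a b \<longleftrightarrow> a = b \<or> opt_less ord a b"

definition lpp :: "('v pp \<Rightarrow> 'v pp \<Rightarrow> bool) \<Rightarrow> ('v,'a::zero) mpoly \<Rightarrow> 'v pp option" where
  "lpp ord f = (if f = 0 then None
     else Some (THE t. t \<in> Poly_Mapping.keys f \<and> (\<forall>s\<in>Poly_Mapping.keys f. s \<noteq> t \<longrightarrow> ord s t)))"

definition lc :: "('v pp \<Rightarrow> 'v pp \<Rightarrow> bool) \<Rightarrow> ('v,'a::zero) mpoly \<Rightarrow> 'a" where
  "lc ord f = (case lpp ord f of None \<Rightarrow> 0 | Some t \<Rightarrow> Poly_Mapping.lookup f t)"

definition vterms :: "nat \<Rightarrow> ('v,'a::zero) vec \<Rightarrow> ('v pp \<times> nat) set" where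
  "vterms m u = {(t, i). i < m \<and> t \<in> Poly_Mapping.keys (u i)}"

definition lpp_v :: "('v pp \<times> nat \<Rightarrow> 'v pp \<times> nat \<Rightarrow> bool) \<Rightarrow> nat \<Rightarrow> ('v,'a::zero) vec
    \<Rightarrow> ('v pp \<times> nat) option" where
  "lpp_v ord m u = (if vterms m u = {} then None
     else Some (THE x. x \<in> vterms m u \<and> (\<forall>y\<in>vterms m u. y \<noteq> x \<longrightarrow> ord y x)))"

definition term_dvd :: "('v pp \<times> nat) option \<Rightarrow> ('v pp \<times> nat) option \<Rightarrow> bool" where
  "term_dvd a b = (case (a, b) of
      (None, None) \<Rightarrow> True
    | (Some (s, i), Some (t, j)) \<Rightarrow> i = j \<and> pp_dvd s t
    | _ \<Rightarrow> False)"

definition monom :: "'v pp \<Rightarrow> 'a \<Rightarrow> ('v,'a::zero) mpoly" where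
  "monom t c = Poly_Mapping.single t c"

definition unitv :: "nat \<Rightarrow> ('v,'a::comm_ring_1) vec" where
  "unitv i = (\<lambda>k. if k = i then 1 else 0)"

definition vscale :: "('v,'a::comm_ring_1) mpoly \<Rightarrow> ('v,'a) vec \<Rightarrow> ('v,'a) vec" where
  "vscale p u = (\<lambda>k. p * u k)"

definition vsub :: "('v,'a::comm_ring_1) vec \<Rightarrow> ('v,'a) vec \<Rightarrow> ('v,'a) vec" where
  "vsub u v = (\<lambda>k. u k - v k)"

definition Mmod :: "nat \<Rightarrow> (nat \<Rightarrow> ('v,'a::comm_ring_1) mpoly) \<Rightarrow> ('v,'a) elem set" where
  "Mmod m f = {(u, p). (\<forall>i\<ge>m. u i = 0) \<and> p = (\<Sum>i<m. u i * f i)}"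

definition is_SGB :: "('v pp \<Rightarrow> 'v pp \<Rightarrow> bool) \<Rightarrow> ('v pp \<times> nat \<Rightarrow> 'v pp \<times> nat \<Rightarrow> bool)
    \<Rightarrow> nat \<Rightarrow> (nat \<Rightarrow> ('v,'a::field) mpoly) \<Rightarrow> ('v,'a) elem set \<Rightarrow> bool" where
  "is_SGB ordR ordM m f B \<longleftrightarrow> finite B \<and> B \<subseteq> Mmod m f \<and>
     (\<forall>(u, p)\<in>Mmod m f. p \<noteq> 0 \<longrightarrow>
        (\<exists>(v, g)\<in>B. g \<noteq> 0 \<and> pp_dvd (the (lpp ordR g)) (the (lpp ordR p)) \<and>
           opt_le ordM
             (lpp_v ordM m (vscale (monom (the (lpp ordR p) - the (lpp ordR g)) 1) v))
             (lpp_v ordM m u)))"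

text \<open>Elements of G are referred to by their index in the list G (so that equal
  values added at different times are distinct elements). For indices a, b:
  t_a = lcm(lpp f_a, lpp f_b) / lpp f_a.\<close>
definition cp_mult :: "('v pp \<Rightarrow> 'v pp \<Rightarrow> bool) \<Rightarrow> ('v,'a::field) elem list \<Rightarrow> nat \<Rightarrow> nat \<Rightarrow> 'v pp" where
  "cp_mult ordR G a b =
     pp_lcm (the (lpp ordR (snd (G ! a)))) (the (lpp ordR (snd (G ! b)))) - the (lpp ordR (snd (G ! a)))"

definition cp_sig :: "('v pp \<Rightarrow> 'v pp \<Rightarrow> bool) \<Rightarrow> ('v pp \<times> nat \<Rightarrow> 'v pp \<times> nat \<Rightarrow> bool) \<Rightarrow> nat
    \<Rightarrow> ('v,'a::field) elem list \<Rightarrow> nat \<Rightarrow> nat \<Rightarrow> ('v pp \<times> nat) option" where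
  "cp_sig ordR ordM m G a b = lpp_v ordM m (vscale (monom (cp_mult ordR G a b) 1) (fst (G ! a)))"

definition orient :: "('v pp \<Rightarrow> 'v pp \<Rightarrow> bool) \<Rightarrow> ('v pp \<times> nat \<Rightarrow> 'v pp \<times> nat \<Rightarrow> bool) \<Rightarrow> nat
    \<Rightarrow> ('v,'a::field) elem list \<Rightarrow> nat \<Rightarrow> nat \<Rightarrow> nat \<times> nat" where
  "orient ordR ordM m G a b =
     (if opt_le ordM (cp_sig ordR ordM m G b a) (cp_sig ordR ordM m G a b) then (a, b) else (b, a))"

definition cp_regular :: "('v pp \<Rightarrow> 'v pp \<Rightarrow> bool) \<Rightarrow> ('v pp \<times> nat \<Rightarrow> 'v pp \<times> nat \<Rightarrow> bool) \<Rightarrow> nat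
    \<Rightarrow> ('v,'a::field) elem list \<Rightarrow> nat \<Rightarrow> nat \<Rightarrow> bool" where
  "cp_regular ordR ordM m G a b \<longleftrightarrow>
     opt_less ordM (cp_sig ordR ordM m G b a) (cp_sig ordR ordM m G a b)"

definition spoly :: "('v pp \<Rightarrow> 'v pp \<Rightarrow> bool) \<Rightarrow> ('v,'a::field) elem list \<Rightarrow> nat \<Rightarrow> nat \<Rightarrow> ('v,'a) elem" where
  "spoly ordR G a b =
     (let ta = cp_mult ordR G a b; tb = cp_mult ordR G b a;
          c = lc ordR (snd (G ! a)) / lc ordR (snd (G ! b))
      in (vsub (vscale (monom ta 1) (fst (G ! a))) (vscale (monom tb c) (fst (G ! b))),
          monom ta 1 * snd (G ! a) - monom tb c * snd (G ! b)))"

definition mult_rewritable :: "('v pp \<times> nat \<Rightarrow> 'v pp \<times> nat \<Rightarrow> bool) \<Rightarrow> nat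
    \<Rightarrow> ('v,'a::field) elem list \<Rightarrow> (nat \<Rightarrow> nat \<Rightarrow> bool) \<Rightarrow> 'v pp \<Rightarrow> nat \<Rightarrow> bool" where
  "mult_rewritable ordM m G lt t a \<longleftrightarrow>
     (\<exists>k<length G. term_dvd (lpp_v ordM m (fst (G ! k)))
                             (lpp_v ordM m (vscale (monom t 1) (fst (G ! a)))) \<and> lt k a)"

definition cp_rewritable :: "('v pp \<Rightarrow> 'v pp \<Rightarrow> bool) \<Rightarrow> ('v pp \<times> nat \<Rightarrow> 'v pp \<times> nat \<Rightarrow> bool) \<Rightarrow> nat
    \<Rightarrow> ('v,'a::field) elem list \<Rightarrow> (nat \<Rightarrow> nat \<Rightarrow> bool) \<Rightarrow> nat \<Rightarrow> nat \<Rightarrow> bool" where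
  "cp_rewritable ordR ordM m G lt a b \<longleftrightarrow>
     mult_rewritable ordM m G lt (cp_mult ordR G a b) a \<or>
     mult_rewritable ordM m G lt (cp_mult ordR G b a) b"

definition red1 :: "('v pp \<Rightarrow> 'v pp \<Rightarrow> bool) \<Rightarrow> ('v pp \<times> nat \<Rightarrow> 'v pp \<times> nat \<Rightarrow> bool) \<Rightarrow> nat
    \<Rightarrow> ('v,'a::field) elem list \<Rightarrow> ('v,'a) elem \<Rightarrow> ('v,'a) elem \<Rightarrow> bool" where
  "red1 ordR ordM m G x y \<longleftrightarrow>
     (\<exists>k<length G.
        let (v, g) = G ! k; (u, f) = x;
            c = lc ordR f / lc ordR g; t = the (lpp ordR f) - the (lpp ordR g)
        in g \<noteq> 0 \<and> f \<noteq> 0 \<and> pp_dvd (the (lpp ordR g)) (the (lpp ordR f)) \<and>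
           lpp_v ordM m (vsub u (vscale (monom t c) v)) = lpp_v ordM m u \<and>
           y = (vsub u (vscale (monom t c) v), f - monom t c * g))"

type_synonym ('v,'a) gstate = "('v,'a) elem list \<times> (nat \<times> nat) set \<times> (nat \<Rightarrow> nat \<Rightarrow> bool)"

definition gG :: "('v,'a) gstate \<Rightarrow> ('v,'a) elem list" where "gG s = fst s"
definition gCP :: "('v,'a) gstate \<Rightarrow> (nat \<times> nat) set" where "gCP s = fst (snd s)"
definition glt :: "('v,'a) gstate \<Rightarrow> nat \<Rightarrow> nat \<Rightarrow> bool" where "glt s = snd (snd s)"

definition spo_on :: "nat \<Rightarrow> (nat \<Rightarrow> nat \<Rightarrow> bool) \<Rightarrow> bool" where
  "spo_on N lt \<longleftrightarrow> (\<forall>x y. lt x y \<longrightarrow> x < N \<and> y < N) \<and> (\<forall>x. \<not> lt x x) \<and>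
     (\<forall>x y z. lt x y \<longrightarrow> lt y z \<longrightarrow> lt x z)"

definition G_init :: "nat \<Rightarrow> (nat \<Rightarrow> ('v,'a::field) mpoly) \<Rightarrow> ('v,'a) elem list" where
  "G_init m f = map (\<lambda>i. (unitv i, f i)) [0..<m] @
     concat (map (\<lambda>i. map (\<lambda>j. (vsub (vscale (f j) (unitv i)) (vscale (f i) (unitv j)), 0))
                         [Suc i..<m]) [0..<m])"

definition CP_init :: "('v pp \<Rightarrow> 'v pp \<Rightarrow> bool) \<Rightarrow> ('v pp \<times> nat \<Rightarrow> 'v pp \<times> nat \<Rightarrow> bool) \<Rightarrow> nat
    \<Rightarrow> (nat \<Rightarrow> ('v,'a::field) mpoly) \<Rightarrow> (nat \<times> nat) set" where
  "CP_init ordR ordM m f =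
     {orient ordR ordM m (G_init m f) i j | i j. i < j \<and> j < m \<and> f i \<noteq> 0 \<and> f j \<noteq> 0}"

definition gbgc_init :: "('v pp \<Rightarrow> 'v pp \<Rightarrow> bool) \<Rightarrow> ('v pp \<times> nat \<Rightarrow> 'v pp \<times> nat \<Rightarrow> bool) \<Rightarrow> nat
    \<Rightarrow> (nat \<Rightarrow> ('v,'a::field) mpoly) \<Rightarrow> ('v,'a) gstate \<Rightarrow> bool" where
  "gbgc_init ordR ordM m f s \<longleftrightarrow>
     gG s = G_init m f \<and> gCP s = CP_init ordR ordM m f \<and> spo_on (length (G_init m f)) (glt s)"

text \<open>One iteration of the while loop, processing the critical pair (a, b).
  The reduction result (w, h) is any element reachable by one-step reductions
  that is not further reducible (arbitrary choice of reducers). The new order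
  is arbitrary, subject to being a strict partial order on the enlarged G
  restricting to the old one on the old G. The new element (w,h) gets index
  length G (it is appended first, followed by the syzygies when h is nonzero).\<close>
definition gbgc_step :: "('v pp \<Rightarrow> 'v pp \<Rightarrow> bool) \<Rightarrow> ('v pp \<times> nat \<Rightarrow> 'v pp \<times> nat \<Rightarrow> bool) \<Rightarrow> nat
    \<Rightarrow> (nat \<Rightarrow> ('v,'a::field) mpoly) \<Rightarrow> ('v,'a) gstate \<Rightarrow> nat \<times> nat \<Rightarrow> ('v,'a) gstate \<Rightarrow> bool" where
  "gbgc_step ordR ordM m f s ab s' \<longleftrightarrow>
     (let (a, b) = ab; G = gG s in
      ab \<in> gCP s \<and>
      (if cp_regular ordR ordM m G a b \<and> \<not> cp_rewritable ordR ordM m G (glt s) a b then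
         (\<exists>w h. (red1 ordR ordM m G)\<^sup>*\<^sup>* (spoly ordR G a b) (w, h) \<and>
                \<not> (\<exists>y. red1 ordR ordM m G (w, h) y) \<and>
                gG s' = G @ [(w, h)] @
                   (if h \<noteq> 0 then map (\<lambda>i. (vsub (vscale h (unitv i)) (vscale (f i) w), 0)) [0..<m]
                    else []) \<and>
                gCP s' = (gCP s - {ab}) \<union>
                   (if h \<noteq> 0 then {orient ordR ordM m (gG s') (length G) j | j.
                                      j < length G \<and> snd (G ! j) \<noteq> 0}
                    else {}) \<and>
                spo_on (length (gG s')) (glt s') \<and>
                (\<forall>x y. x < length G \<longrightarrow> y < length G \<longrightarrow> glt s' x y = glt s x y))
       else s' = (gG s, gCP s - {ab}, glt s)))"

text \<open>A terminating run: states ss!0, ..., ss!N and chosen pairs cps!0, ..., cps!(N-1),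
  ending with an empty set of critical pairs; the output is gG (last ss).\<close>
definition gbgc_run :: "('v pp \<Rightarrow> 'v pp \<Rightarrow> bool) \<Rightarrow> ('v pp \<times> nat \<Rightarrow> 'v pp \<times> nat \<Rightarrow> bool) \<Rightarrow> nat
    \<Rightarrow> (nat \<Rightarrow> ('v,'a::field) mpoly) \<Rightarrow> ('v,'a) gstate list \<Rightarrow> (nat \<times> nat) list \<Rightarrow> bool" where
  "gbgc_run ordR ordM m f ss cps \<longleftrightarrow>
     length ss = Suc (length cps) \<and>
     gbgc_init ordR ordM m f (ss ! 0) \<and>
     (\<forall>k<length cps. gbgc_step ordR ordM m f (ss ! k) (cps ! k) (ss ! Suc k)) \<and>
     gCP (last ss) = {}"

text \<open>Admissibility of the orders along the run: whenever the selected pair (a, b)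
  is regular and not gen-rewritable, the new element (w, h) (index length G)
  is below (u_a, f_a) in the updated order.\<close>
definition gbgc_admissible :: "('v pp \<Rightarrow> 'v pp \<Rightarrow> bool) \<Rightarrow> ('v pp \<times> nat \<Rightarrow> 'v pp \<times> nat \<Rightarrow> bool) \<Rightarrow> nat
    \<Rightarrow> ('v,'a::field) gstate list \<Rightarrow> (nat \<times> nat) list \<Rightarrow> bool" where
  "gbgc_admissible ordR ordM m ss cps \<longleftrightarrow>
     (\<forall>k<length cps. let (a, b) = cps ! k; G = gG (ss ! k) in
        cp_regular ordR ordM m G a b \<and> \<not> cp_rewritable ordR ordM m G (glt (ss ! k)) a b \<longrightarrow>
        glt (ss ! Suc k) (length G) a)"

end

theory Submission imports Defs "HOL-Library.Ramsey" begin


abbreviation lk where "lk \<equiv> Poly_Mapping.lookup"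
abbreviation ks where "ks \<equiv> Poly_Mapping.keys"

definition is_max :: "('b \<Rightarrow> 'b \<Rightarrow> bool) \<Rightarrow> 'b set \<Rightarrow> 'b \<Rightarrow> bool" where
  "is_max R A x \<longleftrightarrow> x \<in> A \<and> (\<forall>y\<in>A. y \<noteq> x \<longrightarrow> R y x)"

lemma ex_max:
  assumes "finite A" "A \<noteq> {}" "\<forall>x\<in>A. \<forall>y\<in>A. x \<noteq> y \<longrightarrow> R x y \<or> R y x"
    "\<forall>x y z. x\<in>A \<longrightarrow> y\<in>A \<longrightarrow> z\<in>A \<longrightarrow> R x y \<longrightarrow> R y z \<longrightarrow> R x z"
  shows "\<exists>x. is_max R A x"
  using assms
proof (induction A rule: finite_ne_induct)
  case (singleton x) have "is_max R {x} x" by (simp add: is_max_def) then show ?case by blast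
next
  case (insert a A)
  have "\<exists>x. is_max R A x"
  proof (rule insert.IH)
    show "\<forall>x\<in>A. \<forall>y\<in>A. x \<noteq> y \<longrightarrow> R x y \<or> R y x"
      by (intro ballI impI, rule insert.prems(1)[rule_format]) auto
    show "\<forall>x y z. x\<in>A \<longrightarrow> y\<in>A \<longrightarrow> z\<in>A \<longrightarrow> R x y \<longrightarrow> R y z \<longrightarrow> R x z"
      by (intro allI impI, rule insert.prems(2)[rule_format]) auto
  qed
  then obtain x where x: "is_max R A x" by blast
  show ?case
  proof (cases "R x a")
    case True
    have "is_max R (insert a A) a" unfolding is_max_def
    proof (intro conjI ballI impI)
      fix y assume y: "y \<in> insert a A" "y \<noteq> a"
      show "R y a"
      proof (cases "y = x")
        case True then show ?thesis using \<open>R x a\<close> by simp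
      next
        case False
        then have "R y x" using x y unfolding is_max_def by auto
        have "y \<in> insert a A" "x \<in> insert a A" "a \<in> insert a A" using x y unfolding is_max_def by auto
        then show ?thesis using \<open>R x a\<close> \<open>R y x\<close> insert.prems(2)[rule_format, of y x a] by simp
      qed
    qed simp
    then show ?thesis by blast
  next
    case False
    have "x \<in> A" using x by (simp add: is_max_def)
    then have "a \<noteq> x" using insert.hyps by auto
    moreover have "a \<in> insert a A" "x \<in> insert a A" using \<open>x \<in> A\<close> by auto
    ultimately have "R a x" using False insert.prems(1)[rule_format, of a x] by simp
    then have "is_max R (insert a A) x" using x by (auto simp: is_max_def)
    then show ?thesis by blast
  qed
qed

lemma max_unique:
  assumes "is_max R A x" "is_max R A y" "\<forall>x\<in>A. \<not> R x x"
    "\<forall>x y z. x\<in>A \<longrightarrow> y\<in>A \<longrightarrow> z\<in>A \<longrightarrow> R x y \<longrightarrow> R y z \<longrightarrow> R x z"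
  shows "x = y"
proof (rule ccontr)
  assume "x \<noteq> y"
  then have "R x y" "R y x" using assms(1,2) unfolding is_max_def by auto
  moreover have "x \<in> A" "y \<in> A" using assms(1,2) unfolding is_max_def by auto
  ultimately show False using assms(3) assms(4)[rule_format, of x y x] by simp
qed

lemma the_max_eq:
  assumes "is_max R A x" "\<forall>x\<in>A. \<not> R x x"
    "\<forall>x y z. x\<in>A \<longrightarrow> y\<in>A \<longrightarrow> z\<in>A \<longrightarrow> R x y \<longrightarrow> R y z \<longrightarrow> R x z"
  shows "(THE t. t \<in> A \<and> (\<forall>s\<in>A. s \<noteq> t \<longrightarrow> R s t)) = x"
proof (rule the_equality)
  show "x \<in> A \<and> (\<forall>s\<in>A. s \<noteq> x \<longrightarrow> R s x)" using assms(1) by (simp add: is_max_def)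
  fix t assume "t \<in> A \<and> (\<forall>s\<in>A. s \<noteq> t \<longrightarrow> R s t)"
  then have "is_max R A t" by (simp add: is_max_def)
  then show "t = x" by (rule max_unique[OF _ assms(1) assms(2,3)])
qed

lemma lookup_single_mult_add:
  fixes g :: "'k::cancel_comm_monoid_add \<Rightarrow>\<^sub>0 'a::comm_ring_1"
  shows "lk (Poly_Mapping.single s c * g) (s + t) = c * lk g t"
proof -
  have "lk (Poly_Mapping.single s c * g) (s + t) =
    (\<Sum>l. (c when s = l) * (\<Sum>q. lk g q when s + t = l + q))"
    by (simp add: lookup_mult lookup_single)
  also have "\<dots> = (\<Sum>l. (c * (\<Sum>q. lk g q when s + t = l + q)) when s = l)"
    by (simp add: when_mult)
  also have "\<dots> = c * (\<Sum>q. lk g q when s + t = s + q)" by simp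
  also have "(\<Sum>q. lk g q when s + t = s + q) = (\<Sum>q. lk g q when q = t)"
    by (rule Sum_any.cong) (auto simp: when_def)
  also have "\<dots> = lk g t" by simp
  finally show ?thesis .
qed

lemma lookup_single_mult_other:
  fixes g :: "'k::cancel_comm_monoid_add \<Rightarrow>\<^sub>0 'a::comm_ring_1"
  assumes "\<forall>t. x \<noteq> s + t"
  shows "lk (Poly_Mapping.single s c * g) x = 0"
proof -
  have "lk (Poly_Mapping.single s c * g) x =
    (\<Sum>l. (c when s = l) * (\<Sum>q. lk g q when x = l + q))"
    by (simp add: lookup_mult lookup_single)
  also have "\<dots> = (\<Sum>l. (c * (\<Sum>q. lk g q when x = l + q)) when s = l)"
    by (simp add: when_mult)
  also have "\<dots> = c * (\<Sum>q. lk g q when x = s + q)" by simp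
  also have "(\<Sum>q. lk g q when x = s + q) = (\<Sum>q::'k. 0)"
    by (rule Sum_any.cong) (use assms in \<open>auto simp: when_def\<close>)
  finally show ?thesis by simp
qed

lemma keys_single_mult:
  fixes g :: "'k::cancel_comm_monoid_add \<Rightarrow>\<^sub>0 'a::field"
  assumes "c \<noteq> 0"
  shows "ks (Poly_Mapping.single s c * g) = (\<lambda>t. s + t) ` ks g"
proof (intro set_eqI iffI)
  fix x assume x: "x \<in> ks (Poly_Mapping.single s c * g)"
  show "x \<in> (\<lambda>t. s + t) ` ks g"
  proof (cases "\<exists>t. x = s + t")
    case True
    then obtain t where t: "x = s + t" by blast
    then show ?thesis using x by (auto simp: in_keys_iff lookup_single_mult_add)
  next
    case False then show ?thesis using x lookup_single_mult_other[of x s c g]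
      by (auto simp: in_keys_iff)
  qed
next
  fix x assume "x \<in> (\<lambda>t. s + t) ` ks g"
  then show "x \<in> ks (Poly_Mapping.single s c * g)"
    using assms by (auto simp: in_keys_iff lookup_single_mult_add)
qed



lemma pp_dvd_add: "pp_dvd (s::'v pp) t \<Longrightarrow> t = s + (t - s)"
  by (rule poly_mapping_eqI) (simp add: lookup_add lookup_minus pp_dvd_def)

lemma pp_dvd_refl: "pp_dvd s s" by (simp add: pp_dvd_def)
lemma pp_dvd_trans: "pp_dvd s t \<Longrightarrow> pp_dvd t u \<Longrightarrow> pp_dvd s u"
  unfolding pp_dvd_def using le_trans by blast
lemma pp_dvd_plus: "pp_dvd s (u + s)" by (simp add: pp_dvd_def lookup_add)
lemma pp_dvd_plus_mono: "pp_dvd s t \<Longrightarrow> pp_dvd (u + s) (u + t)"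
  by (simp add: pp_dvd_def lookup_add)

locale sgb =
  fixes ordR :: "('v::finite) pp \<Rightarrow> 'v pp \<Rightarrow> bool"
    and ordM :: "'v pp \<times> nat \<Rightarrow> 'v pp \<times> nat \<Rightarrow> bool"
    and m :: nat
  assumes TO: "term_order ordR" and MO: "module_term_order m ordM"
begin

lemma R_irrefl: "\<not> ordR s s"
proof -
  have "\<forall>s. \<not> ordR s s" using TO unfolding term_order_def by (rule conjunct1)
  then show ?thesis by blast
qed
lemma R_trans: "ordR s t \<Longrightarrow> ordR t u \<Longrightarrow> ordR s u"
proof -
  have "\<forall>s t u. ordR s t \<longrightarrow> ordR t u \<longrightarrow> ordR s u" using TO unfolding term_order_def by (rule conjunct1[OF conjunct2])
  from this[rule_format, of s t u] show "ordR s t \<Longrightarrow> ordR t u \<Longrightarrow> ordR s u" .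
qed
lemma R_total: "s \<noteq> t \<Longrightarrow> ordR s t \<or> ordR t s"
proof -
  have "\<forall>s t. s \<noteq> t \<longrightarrow> ordR s t \<or> ordR t s" using TO unfolding term_order_def by (rule conjunct1[OF conjunct2[OF conjunct2]])
  from this[rule_format, of s t] show "s \<noteq> t \<Longrightarrow> ordR s t \<or> ordR t s" .
qed
lemma R_mono: "ordR s t \<Longrightarrow> ordR (u + s) (u + t)"
proof -
  have "\<forall>s t u. ordR s t \<longrightarrow> ordR (s + u) (t + u)" using TO unfolding term_order_def by (rule conjunct1[OF conjunct2[OF conjunct2[OF conjunct2]]])
  from this[rule_format, of s t u] show "ordR s t \<Longrightarrow> ordR (u + s) (u + t)"
    by (simp add: add.commute)
qed

lemma M_irrefl: "snd x < m \<Longrightarrow> \<not> ordM x x"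
proof -
  have "\<forall>s i. i < m \<longrightarrow> \<not> ordM (s, i) (s, i)"
    using MO unfolding module_term_order_def by (rule conjunct1)
  from this[rule_format, where s="fst x" and i="snd x", unfolded prod.collapse] show "snd x < m \<Longrightarrow> \<not> ordM x x" .
qed
lemma M_trans: "snd x < m \<Longrightarrow> snd y < m \<Longrightarrow> snd z < m \<Longrightarrow> ordM x y \<Longrightarrow> ordM y z \<Longrightarrow> ordM x z"
proof -
  assume a: "snd x < m" "snd y < m" "snd z < m" "ordM x y" "ordM y z"
  have "\<forall>s i t j u k. i < m \<longrightarrow> j < m \<longrightarrow> k < m \<longrightarrow>
         ordM (s, i) (t, j) \<longrightarrow> ordM (t, j) (u, k) \<longrightarrow> ordM (s, i) (u, k)"
    using MO unfolding module_term_order_def by (rule conjunct1[OF conjunct2])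
  from this[rule_format, where s="fst x" and i="snd x" and t="fst y" and j="snd y" and u="fst z" and k="snd z", unfolded prod.collapse] a show ?thesis by blast
qed
lemma M_total: "snd x < m \<Longrightarrow> snd y < m \<Longrightarrow> x \<noteq> y \<Longrightarrow> ordM x y \<or> ordM y x"
proof -
  assume a: "snd x < m" "snd y < m" "x \<noteq> y"
  have "\<forall>s i t j. i < m \<longrightarrow> j < m \<longrightarrow> (s, i) \<noteq> (t, j) \<longrightarrow>
         ordM (s, i) (t, j) \<or> ordM (t, j) (s, i)"
    using MO unfolding module_term_order_def by (rule conjunct1[OF conjunct2[OF conjunct2]])
  from this[rule_format, where s="fst x" and i="snd x" and t="fst y" and j="snd y", unfolded prod.collapse] a show ?thesis by blast
qed
lemma M_mono: "snd x < m \<Longrightarrow> snd y < m \<Longrightarrow> ordM x y \<Longrightarrow> ordM (u + fst x, snd x) (u + fst y, snd y)"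
proof -
  assume a: "snd x < m" "snd y < m" "ordM x y"
  have "\<forall>s i t j u. i < m \<longrightarrow> j < m \<longrightarrow> ordM (s, i) (t, j) \<longrightarrow> ordM (s + u, i) (t + u, j)"
    using MO unfolding module_term_order_def by (rule conjunct1[OF conjunct2[OF conjunct2[OF conjunct2]]])
  from this[rule_format, where s="fst x" and i="snd x" and t="fst y" and j="snd y" and u=u, unfolded prod.collapse] a show ?thesis by (simp only: add.commute)
qed
lemma M_strict: "i < m \<Longrightarrow> u \<noteq> 0 \<Longrightarrow> ordM (t, i) (t + u, i)"
proof -
  have "\<forall>t i u. i < m \<longrightarrow> u \<noteq> 0 \<longrightarrow> ordM (t, i) (t + u, i)"
    using MO unfolding module_term_order_def by (rule conjunct2[OF conjunct2[OF conjunct2[OF conjunct2]]])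
  from this[rule_format, where t=t and i=i and u=u] show "i < m \<Longrightarrow> u \<noteq> 0 \<Longrightarrow> ordM (t, i) (t + u, i)" .
qed

lemma M_cancel:
  assumes "snd x < m" "snd y < m" "ordM (u + fst x, snd x) (u + fst y, snd y)"
  shows "ordM x y"
proof (rule ccontr)
  assume n: "\<not> ordM x y"
  show False
  proof (cases "x = y")
    case True then show ?thesis using assms(3) M_irrefl[of "(u + fst x, snd x)"] assms(1) by simp
  next
    case False
    then have "ordM y x" using n M_total[OF assms(1,2)] by blast
    then have h: "ordM (u + fst y, snd y) (u + fst x, snd x)" using M_mono[OF assms(2,1)] by blast
    have "ordM (u + fst x, snd x) (u + fst x, snd x)"
      by (rule M_trans[OF _ _ _ assms(3) h]) (use assms(1,2) in simp_all)
    then show ?thesis using M_irrefl[of "(u + fst x, snd x)"] assms(1) by simp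
  qed
qed

lemma M_dvd_le: "i < m \<Longrightarrow> pp_dvd s t \<Longrightarrow> (s, i) = (t, i) \<or> ordM (s, i) (t, i)"
  using pp_dvd_add[of s t] M_strict[of i "t - s" s] by (cases "t - s = 0") auto

lemma M_dvd_not_less: "i < m \<Longrightarrow> pp_dvd s t \<Longrightarrow> \<not> ordM (t, i) (s, i)"
proof
  assume a: "i < m" "pp_dvd s t" "ordM (t, i) (s, i)"
  from M_dvd_le[OF a(1,2)] show False
  proof
    assume "(s, i) = (t, i)" then show False using a M_irrefl[of "(s,i)"] by simp
  next
    assume "ordM (s, i) (t, i)"
    then show False using a M_trans[of "(s,i)" "(t,i)" "(s,i)"] M_irrefl[of "(s,i)"] by simp
  qed
qed

lemma lpp_Some_iff: "lpp ordR p = Some t \<longleftrightarrow> is_max ordR (ks p) t"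
proof (cases "p = 0")
  case True then show ?thesis by (simp add: lpp_def is_max_def)
next
  case False
  have props: "\<forall>x\<in>ks p. \<not> ordR x x"
     "\<forall>x y z. x\<in>ks p \<longrightarrow> y\<in>ks p \<longrightarrow> z\<in>ks p \<longrightarrow> ordR x y \<longrightarrow> ordR y z \<longrightarrow> ordR x z"
    using R_irrefl R_trans by (blast, blast)
  have "\<exists>x. is_max ordR (ks p) x"
  proof (rule ex_max)
    show "\<forall>x\<in>ks p. \<forall>y\<in>ks p. x \<noteq> y \<longrightarrow> ordR x y \<or> ordR y x" using R_total by blast
    show "\<forall>x y z. x\<in>ks p \<longrightarrow> y\<in>ks p \<longrightarrow> z\<in>ks p \<longrightarrow> ordR x y \<longrightarrow> ordR y z \<longrightarrow> ordR x z"
      using R_trans by blast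
  qed (use False in auto)
  then obtain x where x: "is_max ordR (ks p) x" by blast
  have e: "lpp ordR p = Some x" using the_max_eq[OF x props] False by (simp add: lpp_def)
  show ?thesis
  proof
    assume "lpp ordR p = Some t" then show "is_max ordR (ks p) t" using e x by simp
  next
    assume "is_max ordR (ks p) t" then have "t = x" by (rule max_unique[OF _ x props])
    then show "lpp ordR p = Some t" using e by simp
  qed
qed

lemma lpp_None_iff: "lpp ordR p = None \<longleftrightarrow> p = 0"
proof -
  have "p \<noteq> 0 \<Longrightarrow> lpp ordR p \<noteq> None" by (simp add: lpp_def)
  then show ?thesis by (auto simp: lpp_def)
qed

lemma lpp_exists: "p \<noteq> 0 \<Longrightarrow> \<exists>t. lpp ordR p = Some t"
  using lpp_None_iff by (cases "lpp ordR p") auto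

lemma vterms_finite: "finite (vterms m u)"
proof -
  have "vterms m u \<subseteq> (\<Union>i<m. (\<lambda>t. (t, i)) ` ks (u i))" by (auto simp: vterms_def)
  then show ?thesis by (rule finite_subset) auto
qed

lemma vterms_snd: "x \<in> vterms m u \<Longrightarrow> snd x < m" by (auto simp: vterms_def)

lemma LV_Some_iff: "lpp_v ordM m u = Some T \<longleftrightarrow> is_max ordM (vterms m u) T"
proof (cases "vterms m u = {}")
  case True then show ?thesis by (simp add: lpp_v_def is_max_def)
next
  case False
  have props: "\<forall>x\<in>vterms m u. \<not> ordM x x"
     "\<forall>x y z. x\<in>vterms m u \<longrightarrow> y\<in>vterms m u \<longrightarrow> z\<in>vterms m u \<longrightarrow> ordM x y \<longrightarrow> ordM y z \<longrightarrow> ordM x z"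
    using M_irrefl vterms_snd apply blast
    using M_trans vterms_snd by blast
  have "\<exists>x. is_max ordM (vterms m u) x"
  proof (rule ex_max)
    show "\<forall>x\<in>vterms m u. \<forall>y\<in>vterms m u. x \<noteq> y \<longrightarrow> ordM x y \<or> ordM y x"
      using M_total vterms_snd by blast
    show "\<forall>x y z. x\<in>vterms m u \<longrightarrow> y\<in>vterms m u \<longrightarrow> z\<in>vterms m u \<longrightarrow> ordM x y \<longrightarrow> ordM y z \<longrightarrow> ordM x z"
      using M_trans vterms_snd by blast
  qed (use False vterms_finite in auto)
  then obtain x where x: "is_max ordM (vterms m u) x" by blast
  have e: "lpp_v ordM m u = Some x" using the_max_eq[OF x props] False by (simp add: lpp_v_def)
  show ?thesis
  proof
    assume "lpp_v ordM m u = Some T" then show "is_max ordM (vterms m u) T" using e x by simp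
  next
    assume "is_max ordM (vterms m u) T" then have "T = x" by (rule max_unique[OF _ x props])
    then show "lpp_v ordM m u = Some T" using e by simp
  qed
qed

lemma LV_None_iff: "lpp_v ordM m u = None \<longleftrightarrow> vterms m u = {}"
  by (simp add: lpp_v_def)

lemma LV_in: "lpp_v ordM m u = Some T \<Longrightarrow> T \<in> vterms m u"
  by (simp add: LV_Some_iff is_max_def)

lemma LV_snd: "lpp_v ordM m u = Some T \<Longrightarrow> snd T < m"
  by (rule vterms_snd[OF LV_in])

lemma opt_less_max:
  assumes "snd T < m" "\<forall>x\<in>vterms m w. ordM x T"
  shows "opt_less ordM (lpp_v ordM m w) (Some T)"
proof (cases "lpp_v ordM m w")
  case None then show ?thesis by (simp add: opt_less_def)
next
  case (Some x)
  then have "x \<in> vterms m w" by (rule LV_in)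
  then show ?thesis using Some assms by (simp add: opt_less_def)
qed

end


context sgb begin

lemma lpp_mult:
  fixes c :: "'a::field"
  assumes "c \<noteq> 0"
  shows "lpp ordR (monom s c * g) = map_option ((+) s) (lpp ordR g)"
proof (cases "g = 0")
  case True then show ?thesis by (simp add: lpp_def)
next
  case False
  obtain t where t: "lpp ordR g = Some t" using lpp_exists False by blast
  have tm: "is_max ordR (ks g) t" using t by (simp add: lpp_Some_iff)
  have "is_max ordR (ks (monom s c * g)) (s + t)"
    unfolding is_max_def monom_def keys_single_mult[OF assms]
  proof (intro conjI ballI impI)
    show "s + t \<in> (\<lambda>t. s + t) ` ks g" using tm by (simp add: is_max_def)
    fix y assume y: "y \<in> (\<lambda>t. s + t) ` ks g" "y \<noteq> s + t"
    then obtain t' where t': "t' \<in> ks g" "y = s + t'" by blast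
    then have "t' \<noteq> t" using y(2) by blast
    then have "ordR t' t" using tm t'(1) by (simp add: is_max_def)
    then show "ordR y (s + t)" using R_mono t'(2) by blast
  qed
  then have "lpp ordR (monom s c * g) = Some (s + t)" by (simp add: lpp_Some_iff)
  then show ?thesis using t by simp
qed

lemma lpp_diff_gt:
  fixes p :: "('v,'a::field) mpoly"
  assumes "lpp ordR p = Some a" "lpp ordR q = Some b" "ordR b a"
  shows "lpp ordR (p - q) = Some a"
proof -
  have pa: "is_max ordR (ks p) a" and qb: "is_max ordR (ks q) b" using assms by (simp_all add: lpp_Some_iff)
  have "a \<notin> ks q"
  proof
    assume "a \<in> ks q"
    then have "a = b \<or> ordR a b" using qb by (auto simp: is_max_def)
    then show False using assms(3) R_irrefl[of a] R_trans[of a b a] by blast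
  qed
  have "is_max ordR (ks (p - q)) a" unfolding is_max_def
  proof (intro conjI ballI impI)
    show "a \<in> ks (p - q)" using pa \<open>a \<notin> ks q\<close> by (simp add: is_max_def in_keys_iff lookup_minus)
    fix y assume y: "y \<in> ks (p - q)" "y \<noteq> a"
    then have "y \<in> ks p \<or> y \<in> ks q" by (auto simp: in_keys_iff lookup_minus)
    then show "ordR y a"
    proof
      assume "y \<in> ks p" then show ?thesis using pa y by (simp add: is_max_def)
    next
      assume "y \<in> ks q" then have "y = b \<or> ordR y b" using qb by (auto simp: is_max_def)
      then show ?thesis using assms(3) R_trans[of y b a] by blast
    qed
  qed
  then show ?thesis by (simp add: lpp_Some_iff)
qed

lemma lpp_diff_lt:
  fixes p :: "('v,'a::field) mpoly"
  assumes "lpp ordR p = Some a" "lpp ordR q = Some b" "ordR a b"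
  shows "lpp ordR (p - q) = Some b"
proof -
  have pa: "is_max ordR (ks p) a" and qb: "is_max ordR (ks q) b" using assms by (simp_all add: lpp_Some_iff)
  have "b \<notin> ks p"
  proof
    assume "b \<in> ks p"
    then have "b = a \<or> ordR b a" using pa by (auto simp: is_max_def)
    then show False using assms(3) R_irrefl[of a] R_trans[of a b a] by blast
  qed
  have "is_max ordR (ks (p - q)) b" unfolding is_max_def
  proof (intro conjI ballI impI)
    show "b \<in> ks (p - q)" using qb \<open>b \<notin> ks p\<close> by (simp add: is_max_def in_keys_iff lookup_minus)
    fix y assume y: "y \<in> ks (p - q)" "y \<noteq> b"
    then have "y \<in> ks p \<or> y \<in> ks q" by (auto simp: in_keys_iff lookup_minus)
    then show "ordR y b"
    proof
      assume "y \<in> ks q" then show ?thesis using qb y by (simp add: is_max_def)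
    next
      assume "y \<in> ks p" then have "y = a \<or> ordR y a" using pa by (auto simp: is_max_def)
      then show ?thesis using assms(3) R_trans[of y a b] by blast
    qed
  qed
  then show ?thesis by (simp add: lpp_Some_iff)
qed

lemma vterms_vscale:
  fixes c :: "'a::field"
  assumes "c \<noteq> 0"
  shows "vterms m (vscale (monom s c) u) = (\<lambda>(t, i). (s + t, i)) ` vterms m u"
  unfolding vterms_def vscale_def monom_def keys_single_mult[OF assms] by auto

lemma LV_vscale:
  fixes c :: "'a::field"
  assumes "c \<noteq> 0"
  shows "lpp_v ordM m (vscale (monom s c) u) = map_option (\<lambda>(t, i). (s + t, i)) (lpp_v ordM m u)"
proof (cases "lpp_v ordM m u")
  case None
  then have "vterms m u = {}" by (simp add: LV_None_iff)
  then have "vterms m (vscale (monom s c) u) = {}" unfolding vterms_vscale[OF assms] by simp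
  then show ?thesis using None by (simp add: lpp_v_def)
next
  case (Some T)
  obtain t i where T: "T = (t, i)" by (cases T)
  have tm: "is_max ordM (vterms m u) (t, i)" using Some T by (simp add: LV_Some_iff)
  have im: "i < m" using tm vterms_snd by (auto simp: is_max_def)
  have "is_max ordM (vterms m (vscale (monom s c) u)) (s + t, i)"
    unfolding is_max_def vterms_vscale[OF assms]
  proof (intro conjI ballI impI)
    show "(s + t, i) \<in> (\<lambda>(t, i). (s + t, i)) ` vterms m u" using tm by (force simp: is_max_def)
    fix y assume y: "y \<in> (\<lambda>(t, i). (s + t, i)) ` vterms m u" "y \<noteq> (s + t, i)"
    then obtain t' j where t': "(t', j) \<in> vterms m u" "y = (s + t', j)" by auto
    then have "(t', j) \<noteq> (t, i)" using y(2) by blast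
    then have o: "ordM (t', j) (t, i)" using tm t'(1) by (simp add: is_max_def)
    have "j < m" using t'(1) vterms_snd by fastforce
    from M_mono[of "(t',j)" "(t,i)" s] o \<open>j < m\<close> im show "ordM y (s + t, i)" using t'(2) by simp
  qed
  then have "lpp_v ordM m (vscale (monom s c) u) = Some (s + t, i)" by (simp add: LV_Some_iff)
  then show ?thesis using Some T by simp
qed

lemma LV_vscale_zero: "lpp_v ordM m (vscale (monom s 0) (u::('v,'a::field) vec)) = None"
  by (simp add: LV_None_iff vterms_def vscale_def monom_def)

lemma vterms_vsub: "vterms m (vsub (u::('v,'a::field) vec) v) \<subseteq> vterms m u \<union> vterms m v"
  by (auto simp: vterms_def vsub_def in_keys_iff lookup_minus)

lemma LV_vsub_gt:
  fixes u :: "('v,'a::field) vec"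
  assumes "lpp_v ordM m u = Some T" "opt_less ordM (lpp_v ordM m v) (Some T)"
  shows "lpp_v ordM m (vsub u v) = Some T"
proof -
  obtain t i where T: "T = (t, i)" by (cases T)
  have tm: "is_max ordM (vterms m u) T" using assms(1) by (simp add: LV_Some_iff)
  have im: "i < m" using tm vterms_snd T by (auto simp: is_max_def)
  have vless: "ordM y T" if y: "y \<in> vterms m v" for y
  proof -
    obtain x where x: "lpp_v ordM m v = Some x" using y LV_None_iff by (cases "lpp_v ordM m v") auto
    have xm: "is_max ordM (vterms m v) x" using x by (simp add: LV_Some_iff)
    have xT: "ordM x T" using assms(2) x by (simp add: opt_less_def)
    have "y = x \<or> ordM y x" using xm y by (auto simp: is_max_def)
    then show ?thesis
    proof
      assume "ordM y x"
      then show ?thesis using M_trans[of y x T] xT vterms_snd[OF y] LV_snd[OF x] im T by simp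
    qed (use xT in simp)
  qed
  have Tnv: "T \<notin> vterms m v" using vless M_irrefl[of T] im T by auto
  have "is_max ordM (vterms m (vsub u v)) T" unfolding is_max_def
  proof (intro conjI ballI impI)
    show "T \<in> vterms m (vsub u v)" using tm Tnv T
      by (auto simp: is_max_def vterms_def vsub_def in_keys_iff lookup_minus)
    fix y assume y: "y \<in> vterms m (vsub u v)" "y \<noteq> T"
    then have "y \<in> vterms m u \<or> y \<in> vterms m v" using vterms_vsub by blast
    then show "ordM y T"
    proof
      assume "y \<in> vterms m u" then show ?thesis using tm y by (simp add: is_max_def)
    qed (rule vless)
  qed
  then show ?thesis by (simp add: LV_Some_iff)
qed

lemma LV_cancel:
  fixes u1 :: "('v,'a::field) vec"
  assumes "lpp_v ordM m u1 = Some (t, i)" "lpp_v ordM m u2 = Some (t, i)"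
  shows "opt_less ordM (lpp_v ordM m (vsub u1 (vscale (monom 0 (lk (u1 i) t / lk (u2 i) t)) u2))) (Some (t, i))"
proof -
  define c where "c = lk (u1 i) t / lk (u2 i) t"
  have m1: "is_max ordM (vterms m u1) (t, i)" and m2: "is_max ordM (vterms m u2) (t, i)"
    using assms by (simp_all add: LV_Some_iff)
  have im: "i < m" using m1 vterms_snd by (force simp: is_max_def)
  have l1: "lk (u1 i) t \<noteq> 0" and l2: "lk (u2 i) t \<noteq> 0" using m1 m2
    by (auto simp: is_max_def vterms_def in_keys_iff)
  then have c0: "c \<noteq> 0" by (simp add: c_def)
  have vs: "vterms m (vscale (monom 0 c) u2) = vterms m u2"
    using vterms_vscale[OF c0, of 0 u2] by (auto simp: image_iff)
  define w where "w = vsub u1 (vscale (monom 0 c) u2)"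
  have "lk (w i) t = lk (u1 i) t - c * lk (u2 i) t"
    using lookup_single_mult_add[of 0 c "u2 i" t]
    by (simp add: w_def vsub_def vscale_def monom_def lookup_minus)
  then have wz: "lk (w i) t = 0" using l2 by (simp add: c_def)
  have "\<forall>y\<in>vterms m w. ordM y (t, i)"
  proof
    fix y assume y: "y \<in> vterms m w"
    then have yn: "y \<noteq> (t, i)" using wz by (auto simp: vterms_def in_keys_iff)
    have "y \<in> vterms m u1 \<or> y \<in> vterms m u2" using y vterms_vsub[of u1 "vscale (monom 0 c) u2"] vs
      unfolding w_def by blast
    then show "ordM y (t, i)" using m1 m2 yn by (auto simp: is_max_def)
  qed
  then have "opt_less ordM (lpp_v ordM m w) (Some (t, i))" by (intro opt_less_max) (use im in simp_all)
  then show ?thesis by (simp add: w_def c_def)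
qed

end


lemma pp_lcm_comm: "pp_lcm (a::'v pp) b = pp_lcm b a"
  by (rule poly_mapping_eqI) (simp add: pp_lcm_def lookup_add lookup_minus)

lemma pp_lcm_split:
  fixes a b s s' :: "'v pp"
  assumes "s + a = s' + b"
  shows "s = (s + a - pp_lcm a b) + (pp_lcm a b - a)"
    and "s' = (s + a - pp_lcm a b) + (pp_lcm a b - b)"
proof -
  have e: "lk s v + lk a v = lk s' v + lk b v" for v
    using arg_cong[OF assms, of "\<lambda>x. lk x v"] by (simp add: lookup_add)
  show "s = (s + a - pp_lcm a b) + (pp_lcm a b - a)"
  proof (rule poly_mapping_eqI)
    fix v show "lk s v = lk (s + a - pp_lcm a b + (pp_lcm a b - a)) v"
      using e[of v] by (simp add: pp_lcm_def lookup_add lookup_minus)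
  qed
  show "s' = (s + a - pp_lcm a b) + (pp_lcm a b - b)"
  proof (rule poly_mapping_eqI)
    fix v show "lk s' v = lk (s + a - pp_lcm a b + (pp_lcm a b - b)) v"
      using e[of v] by (simp add: pp_lcm_def lookup_add lookup_minus)
  qed
qed

lemma term_dvd_SomeD:
  assumes "term_dvd x (Some (b, j))"
  shows "\<exists>a. x = Some (a, j) \<and> pp_dvd a b"
  using assms by (cases x) (auto simp: term_dvd_def)

lemma M_sub:
  fixes u :: "('v,'a::field) vec"
  assumes "(u, p) \<in> Mmod m f" "(v, g) \<in> Mmod m f"
  shows "(vsub u (vscale q v), p - q * g) \<in> Mmod m f"
  using assms by (simp add: Mmod_def vsub_def vscale_def left_diff_distrib sum_subtractf
      sum_distrib_left mult.assoc)

lemma M_scale: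
  fixes v :: "('v,'a::field) vec"
  assumes "(v, g) \<in> Mmod m f"
  shows "(vscale q v, q * g) \<in> Mmod m f"
  using assms by (simp add: Mmod_def vscale_def sum_distrib_left mult.assoc)

lemma M_unit:
  assumes "i < m"
  shows "(unitv i, f i) \<in> Mmod m (f :: nat \<Rightarrow> ('v,'a::field) mpoly)"
proof -
  have "(\<Sum>l<m. unitv i l * f l) = (\<Sum>l<m. if l = i then f l else 0)"
    by (rule sum.cong) (auto simp: unitv_def)
  also have "\<dots> = f i" using assms by simp
  finally show ?thesis using assms by (simp add: Mmod_def unitv_def)
qed

lemma M_syz:
  fixes w :: "('v,'a::field) vec"
  assumes "(w, h) \<in> Mmod m f" "i < m"
  shows "(vsub (vscale h (unitv i)) (vscale (f i) w), 0) \<in> Mmod m f"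
proof -
  have wz: "\<forall>l\<ge>m. w l = 0" and hs: "h = (\<Sum>l<m. w l * f l)" using assms(1) by (auto simp: Mmod_def)
  have "(\<Sum>l<m. (h * unitv i l - f i * w l) * f l) = (\<Sum>l<m. h * (unitv i l * f l)) - (\<Sum>l<m. f i * (w l * f l))"
    by (simp add: left_diff_distrib sum_subtractf mult.assoc)
  also have "(\<Sum>l<m. h * (unitv i l * f l)) = h * f i"
    using M_unit[OF assms(2), of f] by (simp add: Mmod_def sum_distrib_left[symmetric])
  also have "(\<Sum>l<m. f i * (w l * f l)) = f i * h" by (simp add: hs sum_distrib_left)
  finally have "(\<Sum>l<m. (h * unitv i l - f i * w l) * f l) = 0" by simp
  moreover have "\<forall>l\<ge>m. h * unitv i l - f i * w l = 0" using wz assms(2) by (simp add: unitv_def)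
  ultimately show ?thesis by (simp add: Mmod_def vsub_def vscale_def)
qed

context sgb begin

lemma M_zero_LV:
  fixes u :: "('v,'a::field) vec"
  assumes "(u, p) \<in> Mmod m f" "lpp_v ordM m u = None"
  shows "p = 0"
proof -
  have "vterms m u = {}" using assms(2) by (simp add: LV_None_iff)
  have "\<forall>i<m. u i = 0"
  proof (intro allI impI)
    fix i assume i: "i < m"
    show "u i = 0"
    proof (rule ccontr)
      assume "u i \<noteq> 0"
      then obtain t where "t \<in> ks (u i)" using keys_eq_empty by blast
      then have "(t, i) \<in> vterms m u" using i by (simp add: vterms_def)
      then show False using \<open>vterms m u = {}\<close> by blast
    qed
  qed
  then show ?thesis using assms(1) by (simp add: Mmod_def)
qed

lemma LV_unitv:
  assumes "i < m"
  shows "lpp_v ordM m (unitv i :: ('v,'a::field) vec) = Some (0, i)"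
proof -
  have "vterms m (unitv i :: ('v,'a) vec) = {(0, i)}" using assms by (auto simp: vterms_def unitv_def)
  then show ?thesis by (simp add: LV_Some_iff is_max_def)
qed

definition RM :: "(('v pp \<times> nat) \<times> ('v pp \<times> nat)) set" where
  "RM = {(x, y). ordM x y \<and> snd x < m \<and> snd y < m}"

lemma enum_vars: "\<exists>n (g :: nat \<Rightarrow> 'v). (UNIV :: 'v set) = g ` {i. i < n}"
proof -
  have "finite (UNIV :: 'v set)" by simp
  then show ?thesis by (simp only: finite_conv_nat_seg_image)
qed

lemma RM_trans: "trans RM"
proof (rule transI)
  fix x y z assume "(x, y) \<in> RM" "(y, z) \<in> RM"
  then show "(x, z) \<in> RM" using M_trans[of x y z] by (simp add: RM_def)
qed

lemma RM_var:
  assumes "(x, y) \<in> RM" "snd x = snd y"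
  shows "\<exists>v. lk (fst x) v < lk (fst y) v"
proof (rule ccontr)
  assume "\<not> ?thesis"
  then have "pp_dvd (fst y) (fst x)" by (auto simp: pp_dvd_def not_less)
  moreover have "snd x < m" using assms(1) by (simp add: RM_def)
  ultimately have "\<not> ordM (fst x, snd x) (fst y, snd x)" using M_dvd_not_less by blast
  moreover have "ordM x y" using assms(1) by (simp add: RM_def)
  ultimately show False using assms(2) by (cases x, cases y) simp
qed

lemma wf_RM: "wf RM"
proof (rule trans_disj_wf_implies_wf)
  show "trans RM" by (rule RM_trans)
  obtain n and g :: "nat \<Rightarrow> 'v" where gn: "(UNIV :: 'v set) = g ` {i. i < n}"
    using enum_vars by blast
  define T where "T = (\<lambda>i. if i < n then {(x, y). snd x = snd y \<and> lk (fst x) (g i) < lk (fst y) (g i)}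
      else if i = n then {(x :: 'v pp \<times> nat, y). snd x < snd y} else {(x, y). snd y < snd x \<and> snd x < m})"
  have "\<forall>i<Suc (Suc n). wf (T i)"
  proof (intro allI impI)
    fix i assume "i < Suc (Suc n)"
    show "wf (T i)"
    proof (cases "i < n")
      case True
      have "T i \<subseteq> inv_image less_than (\<lambda>x. lk (fst x) (g i))" using True by (auto simp: T_def)
      then show ?thesis by (rule wf_subset[rotated]) simp
    next
      case False
      show ?thesis
      proof (cases "i = n")
        case True
        have "T i \<subseteq> inv_image less_than snd" using True by (auto simp: T_def)
        then show ?thesis by (rule wf_subset[rotated]) simp
      next
        case False
        have "T i \<subseteq> measure (\<lambda>x. m - snd x)" using False \<open>\<not> i < n\<close> by (auto simp: T_def)
        then show ?thesis by (rule wf_subset[rotated]) simp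
      qed
    qed
  qed
  moreover have "RM \<subseteq> (\<Union>i<Suc (Suc n). T i)"
  proof
    fix p assume pR: "p \<in> RM"
    then obtain x y where p: "p = (x, y)" by (cases p)
    have xy: "snd x < m" "snd y < m" using pR p by (auto simp: RM_def)
    show "p \<in> (\<Union>i<Suc (Suc n). T i)"
    proof (cases "snd x < snd y")
      case True then have "p \<in> T n" using p by (simp add: T_def)
      then show ?thesis by (intro UN_I[of n]) simp_all
    next
      case F1: False
      show ?thesis
      proof (cases "snd y < snd x")
        case True then have "p \<in> T (Suc n)" using p xy by (simp add: T_def)
        then show ?thesis by (intro UN_I[of "Suc n"]) simp_all
      next
        case False
        then have eq: "snd x = snd y" using F1 by simp
        obtain v where v: "lk (fst x) v < lk (fst y) v" using RM_var[of x y] pR p eq by blast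
        have "v \<in> g ` {i. i < n}" using gn by blast
        then obtain i where "i < n" "v = g i" by blast
        then have "p \<in> T i" using p eq v by (simp add: T_def)
        then show ?thesis using \<open>i < n\<close> by (intro UN_I[of i]) simp_all
      qed
    qed
  qed
  ultimately show "disj_wf RM" unfolding disj_wf by (intro exI[of _ T] exI[of _ "Suc (Suc n)"]) simp
qed

definition reg_red :: "(nat \<Rightarrow> ('v,'a::field) mpoly) \<Rightarrow> 'v pp \<times> nat \<Rightarrow> ('v,'a) mpoly \<Rightarrow> bool" where
  "reg_red f T q \<longleftrightarrow> (\<exists>u' p'. (u', p') \<in> Mmod m f \<and> opt_less ordM (lpp_v ordM m u') (Some T) \<and>
       p' \<noteq> 0 \<and> lpp ordR p' = lpp ordR q)"

lemma not_reg_red_zero: "\<not> reg_red f T 0"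
  by (auto simp: reg_red_def lpp_None_iff lpp_def)

lemma uniq:
  fixes u1 :: "('v,'a::field) vec"
  assumes "(u1, p1) \<in> Mmod m f" "(u2, p2) \<in> Mmod m f"
    "lpp_v ordM m u1 = Some T" "lpp_v ordM m u2 = Some T" "p1 \<noteq> 0"
    "\<not> reg_red f T p1" "\<not> reg_red f T p2"
  shows "p2 \<noteq> 0 \<and> lpp ordR p2 = lpp ordR p1"
proof -
  obtain t i where T: "T = (t, i)" by (cases T)
  define c where "c = lk (u1 i) t / lk (u2 i) t"
  define d where "d = p1 - monom 0 c * p2"
  define du where "du = vsub u1 (vscale (monom 0 c) u2)"
  have dM: "(du, d) \<in> Mmod m f" using M_sub[OF assms(1,2)] by (simp add: d_def du_def)
  have dl: "opt_less ordM (lpp_v ordM m du) (Some T)"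
    using LV_cancel[of u1 t i u2] assms(3,4) T by (simp add: du_def c_def)
  have "(t, i) \<in> vterms m u1" "(t, i) \<in> vterms m u2" using assms(3,4) T LV_in by blast+
  then have c0: "c \<noteq> 0" by (auto simp: c_def vterms_def in_keys_iff)
  show ?thesis
  proof (cases "p2 = 0")
    case True
    then have "d = p1" by (simp add: d_def)
    then have "reg_red f T p1" unfolding reg_red_def using dM dl assms(5) by blast
    then show ?thesis using assms(6) by blast
  next
    case False
    obtain a where a: "lpp ordR p1 = Some a" using lpp_exists assms(5) by blast
    obtain b where b: "lpp ordR p2 = Some b" using lpp_exists False by blast
    have bq: "lpp ordR (monom 0 c * p2) = Some b" using lpp_mult[OF c0, of 0 p2] b by simp
    show ?thesis
    proof (cases "a = b")
      case True then show ?thesis using a b False by simp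
    next
      case ne: False
      then consider "ordR b a" | "ordR a b" using R_total by blast
      then show ?thesis
      proof cases
        case 1
        then have "lpp ordR d = Some a" using lpp_diff_gt[OF a bq] by (simp add: d_def)
        then have "reg_red f T p1" unfolding reg_red_def using dM dl a
          by (intro exI[of _ du] exI[of _ d]) (auto simp: lpp_None_iff[symmetric])
        then show ?thesis using assms(6) by blast
      next
        case 2
        then have "lpp ordR d = Some b" using lpp_diff_lt[OF a bq] by (simp add: d_def)
        then have "reg_red f T p2" unfolding reg_red_def using dM dl b
          by (intro exI[of _ du] exI[of _ d]) (auto simp: lpp_None_iff[symmetric])
        then show ?thesis using assms(7) by blast
      qed
    qed
  qed
qed

end


locale core = sgb ordR ordM m
  for ordR :: "('v::finite) pp \<Rightarrow> 'v pp \<Rightarrow> bool" and ordM :: "'v pp \<times> nat \<Rightarrow> 'v pp \<times> nat \<Rightarrow> bool"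
    and m :: nat +
  fixes f :: "nat \<Rightarrow> ('v,'b::field) mpoly" and G :: "('v,'b) elem list" and lt :: "nat \<Rightarrow> nat \<Rightarrow> bool"
  assumes GM: "set G \<subseteq> Mmod m f"
    and Gunit: "\<And>i. i < m \<Longrightarrow> i < length G \<and> G ! i = (unitv i, f i)"
    and spo: "spo_on (length G) lt"
    and pairs: "\<And>a b. a < length G \<Longrightarrow> b < length G \<Longrightarrow> snd (G!a) \<noteq> 0 \<Longrightarrow> snd (G!b) \<noteq> 0 \<Longrightarrow>
       cp_regular ordR ordM m G a b \<Longrightarrow>
       (\<exists>k'<length G. lt k' a \<and> term_dvd (lpp_v ordM m (fst (G!k'))) (cp_sig ordR ordM m G a b)) \<or>
       (\<exists>k'<length G. lt k' b \<and> term_dvd (lpp_v ordM m (fst (G!k'))) (cp_sig ordR ordM m G b a))"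
begin

definition inD :: "'v pp \<times> nat \<Rightarrow> nat \<Rightarrow> bool" where
  "inD T k \<longleftrightarrow> k < length G \<and> (\<exists>t'. lpp_v ordM m (fst (G!k)) = Some (t', snd T) \<and> pp_dvd t' (fst T))"

definition minD :: "'v pp \<times> nat \<Rightarrow> nat \<Rightarrow> bool" where
  "minD T k \<longleftrightarrow> inD T k \<and> \<not> (\<exists>k'. inD T k' \<and> lt k' k)"

definition sk :: "'v pp \<times> nat \<Rightarrow> nat \<Rightarrow> 'v pp" where
  "sk T k = fst T - fst (the (lpp_v ordM m (fst (G!k))))"

lemma lt_wf: "wf {(x, y). lt x y}"
proof (rule finite_acyclic_wf)
  have "{(x, y). lt x y} \<subseteq> {..<length G} \<times> {..<length G}" using spo by (auto simp: spo_on_def)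
  then show "finite {(x, y). lt x y}" by (rule finite_subset) simp
  have tr: "trans {(x, y). lt x y}" using spo unfolding spo_on_def trans_def by blast
  show "acyclic {(x, y). lt x y}" unfolding acyclic_def trancl_id[OF tr] using spo by (simp add: spo_on_def)
qed

lemma minD_ex:
  assumes "snd T < m"
  shows "\<exists>k. minD T k"
proof -
  have d0: "pp_dvd 0 (fst T)" by (simp add: pp_dvd_def)
  have "inD T (snd T)" unfolding inD_def
    using Gunit[OF assms] LV_unitv[OF assms] d0 by (intro conjI exI[of _ 0]) simp_all
  then have "snd T \<in> {k. inD T k}" by simp
  from wfE_min[OF lt_wf this] obtain z where "z \<in> {k. inD T k}" "\<And>y. (y, z) \<in> {(x, y). lt x y} \<Longrightarrow> y \<notin> {k. inD T k}"
    by blast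
  then have "minD T z" by (auto simp: minD_def)
  then show ?thesis by blast
qed

lemma inD_mult:
  assumes "inD T k"
  shows "(vscale (monom (sk T k) 1) (fst (G!k)), monom (sk T k) 1 * snd (G!k)) \<in> Mmod m f"
    and "lpp_v ordM m (vscale (monom (sk T k) 1) (fst (G!k))) = Some T"
proof -
  have kl: "k < length G" using assms by (simp add: inD_def)
  then have "(fst (G!k), snd (G!k)) \<in> Mmod m f" using GM nth_mem by fastforce
  then show "(vscale (monom (sk T k) 1) (fst (G!k)), monom (sk T k) 1 * snd (G!k)) \<in> Mmod m f"
    by (rule M_scale)
  obtain t' where t': "lpp_v ordM m (fst (G!k)) = Some (t', snd T)" "pp_dvd t' (fst T)"
    using assms by (auto simp: inD_def)
  have "sk T k + t' = fst T" using pp_dvd_add[OF t'(2)] t'(1) by (simp add: sk_def add.commute)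
  then show "lpp_v ordM m (vscale (monom (sk T k) 1) (fst (G!k))) = Some T"
    using LV_vscale[of "1::'b" "sk T k" "fst (G!k)"] t'(1) by simp
qed

lemma LV_Some_of_M:
  assumes "(u, p) \<in> Mmod m f" "p \<noteq> 0"
  shows "\<exists>T. lpp_v ordM m u = Some T"
  using M_zero_LV[OF assms(1)] assms(2) by (cases "lpp_v ordM m u") auto

lemma canon:
  "\<forall>k. snd T < m \<longrightarrow> minD T k \<longrightarrow> snd (G!k) \<noteq> 0 \<longrightarrow> \<not> reg_red f T (monom (sk T k) 1 * snd (G!k))"
proof (induction T rule: wf_induct_rule[OF wf_RM])
  case (1 T)
  show ?case
  proof (intro allI impI notI)
    fix k assume Tm: "snd T < m" and mk: "minD T k" and gk: "snd (G!k) \<noteq> 0"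
      and rr: "reg_red f T (monom (sk T k) 1 * snd (G!k))"
    define s where "s = sk T k"
    define g where "g = snd (G!k)"
    have ik: "inD T k" using mk by (simp add: minD_def)
    obtain tv where tv: "lpp_v ordM m (fst (G!k)) = Some (tv, snd T)" "pp_dvd tv (fst T)"
      using ik by (auto simp: inD_def)
    have sdef: "s = fst T - tv" by (simp add: s_def sk_def tv)
    have fT: "fst T = s + tv" using pp_dvd_add[OF tv(2)] sdef by (simp add: add.commute)
    obtain lg where lg: "lpp ordR g = Some lg" using lpp_exists gk by (auto simp: g_def)
    have lpq: "lpp ordR (monom s 1 * g) = Some (s + lg)" using lpp_mult[of "1::'b" s g] lg by simp
    define W where "W = {T'. \<exists>u' p'. (u', p') \<in> Mmod m f \<and> lpp_v ordM m u' = Some T' \<and> ordM T' T \<and>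
                            p' \<noteq> 0 \<and> lpp ordR p' = Some (s + lg)}"
    have rr': "reg_red f T (monom s 1 * g)" using rr by (simp add: s_def g_def)
    then obtain u0 p0 where u0: "(u0, p0) \<in> Mmod m f" "opt_less ordM (lpp_v ordM m u0) (Some T)"
        "p0 \<noteq> 0" "lpp ordR p0 = Some (s + lg)"
      unfolding reg_red_def lpq by blast
    obtain T0 where T0: "lpp_v ordM m u0 = Some T0" using LV_Some_of_M[OF u0(1,3)] by blast
    have "T0 \<in> W" unfolding W_def using u0 T0 by (auto simp: opt_less_def)
    from wfE_min[OF wf_RM this] obtain T' where T'W: "T' \<in> W" and Tmin: "\<And>y. (y, T') \<in> RM \<Longrightarrow> y \<notin> W"
      by blast
    from T'W obtain u' p' where u': "(u', p') \<in> Mmod m f" "lpp_v ordM m u' = Some T'" "ordM T' T"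
        "p' \<noteq> 0" "lpp ordR p' = Some (s + lg)"
      unfolding W_def by blast
    have T'm: "snd T' < m" using LV_snd u'(2) by blast
    have T'R: "(T', T) \<in> RM" using u'(3) T'm Tm by (simp add: RM_def)
    have nr: "\<not> reg_red f T' p'"
    proof
      assume "reg_red f T' p'"
      then obtain u'' p'' where u'': "(u'', p'') \<in> Mmod m f" "opt_less ordM (lpp_v ordM m u'') (Some T')"
          "p'' \<noteq> 0" "lpp ordR p'' = lpp ordR p'"
        unfolding reg_red_def by blast
      obtain T'' where T'': "lpp_v ordM m u'' = Some T''" using LV_Some_of_M[OF u''(1,3)] by blast
      have o1: "ordM T'' T'" using u''(2) T'' by (simp add: opt_less_def)
      have T''m: "snd T'' < m" using LV_snd T'' by blast
      have "ordM T'' T" using M_trans[OF T''m T'm Tm o1 u'(3)] .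
      then have "T'' \<in> W" unfolding W_def using u'' T'' u'(5) by auto
      moreover have "(T'', T') \<in> RM" using o1 T''m T'm by (simp add: RM_def)
      ultimately show False using Tmin by blast
    qed
    obtain k2 where mk2: "minD T' k2" using minD_ex[OF T'm] by blast
    have ik2: "inD T' k2" using mk2 by (simp add: minD_def)
    obtain tv2 where tv2: "lpp_v ordM m (fst (G!k2)) = Some (tv2, snd T')" "pp_dvd tv2 (fst T')"
      using ik2 by (auto simp: inD_def)
    define s2 where "s2 = sk T' k2"
    define g2 where "g2 = snd (G!k2)"
    have s2def: "s2 = fst T' - tv2" by (simp add: s2_def sk_def tv2)
    have fT': "fst T' = s2 + tv2" using pp_dvd_add[OF tv2(2)] s2def by (simp add: add.commute)
    have E2M: "(vscale (monom s2 1) (fst (G!k2)), monom s2 1 * g2) \<in> Mmod m f"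
      using inD_mult(1)[OF ik2] by (simp add: s2_def g2_def)
    have E2L: "lpp_v ordM m (vscale (monom s2 1) (fst (G!k2))) = Some T'"
      using inD_mult(2)[OF ik2] by (simp add: s2_def)
    have g2nz: "g2 \<noteq> 0"
    proof
      assume "g2 = 0"
      then have "monom s2 1 * g2 = 0" by simp
      then show False using uniq[OF u'(1) E2M u'(2) E2L u'(4) nr] not_reg_red_zero[of f T'] by simp
    qed
    have nr2: "\<not> reg_red f T' (monom s2 1 * g2)"
      using 1[OF T'R, rule_format, of k2] T'm mk2 g2nz by (simp add: s2_def g2_def)
    have "lpp ordR (monom s2 1 * g2) = lpp ordR p'"
      using uniq[OF u'(1) E2M u'(2) E2L u'(4) nr nr2] by simp
    moreover obtain lg2 where lg2: "lpp ordR g2 = Some lg2" using lpp_exists g2nz by blast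
    ultimately have eq: "s2 + lg2 = s + lg" using lpp_mult[of "1::'b" s2 g2] u'(5) by simp
    define L where "L = pp_lcm lg lg2"
    define r where "r = s + lg - L"
    have sr: "s = r + (L - lg)" and s2r: "s2 = r + (L - lg2)"
      using pp_lcm_split[of s lg s2 lg2] eq by (simp_all add: r_def L_def)
    have cm1: "cp_mult ordR G k k2 = L - lg"
      using lg lg2 by (simp add: cp_mult_def L_def g_def g2_def)
    have cm2: "cp_mult ordR G k2 k = L - lg2"
      using lg lg2 pp_lcm_comm[of lg2 lg] by (simp add: cp_mult_def L_def g_def g2_def)
    have cs1: "cp_sig ordR ordM m G k k2 = Some ((L - lg) + tv, snd T)"
      using LV_vscale[of "1::'b" "L - lg" "fst (G!k)"] tv(1) by (simp add: cp_sig_def cm1)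
    have cs2: "cp_sig ordR ordM m G k2 k = Some ((L - lg2) + tv2, snd T')"
      using LV_vscale[of "1::'b" "L - lg2" "fst (G!k2)"] tv2(1) by (simp add: cp_sig_def cm2)
    have fT2: "fst T = r + ((L - lg) + tv)" using fT sr by (simp add: add.assoc)
    have fT'2: "fst T' = r + ((L - lg2) + tv2)" using fT' s2r by (simp add: add.assoc)
    have "ordM (r + ((L - lg2) + tv2), snd T') (r + ((L - lg) + tv), snd T)"
      using u'(3) fT2 fT'2 by (metis prod.collapse)
    then have reg_o: "ordM ((L - lg2) + tv2, snd T') ((L - lg) + tv, snd T)"
      using M_cancel[of "((L - lg2) + tv2, snd T')" "((L - lg) + tv, snd T)" r] T'm Tm by simp
    have reg: "cp_regular ordR ordM m G k k2" by (simp add: cp_regular_def cs1 cs2 opt_less_def reg_o)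
    have kl: "k < length G" "k2 < length G" using ik ik2 by (simp_all add: inD_def)
    from pairs[OF kl gk _ reg] g2nz
    have "(\<exists>k'<length G. lt k' k \<and> term_dvd (lpp_v ordM m (fst (G!k'))) (cp_sig ordR ordM m G k k2)) \<or>
       (\<exists>k'<length G. lt k' k2 \<and> term_dvd (lpp_v ordM m (fst (G!k'))) (cp_sig ordR ordM m G k2 k))"
      by (simp add: g2_def)
    then show False
    proof
      assume "\<exists>k'<length G. lt k' k \<and> term_dvd (lpp_v ordM m (fst (G!k'))) (cp_sig ordR ordM m G k k2)"
      then obtain k' where k': "k' < length G" "lt k' k" "term_dvd (lpp_v ordM m (fst (G!k'))) (cp_sig ordR ordM m G k k2)"
        by blast
      obtain a where a: "lpp_v ordM m (fst (G!k')) = Some (a, snd T)" "pp_dvd a ((L - lg) + tv)"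
        using term_dvd_SomeD[of _ "(L - lg) + tv" "snd T"] k'(3) cs1 by auto
      have "pp_dvd ((L - lg) + tv) (fst T)" using fT2 pp_dvd_plus by metis
      then have "inD T k'" using a k'(1) pp_dvd_trans by (auto simp: inD_def)
      then show False using mk k'(2) by (auto simp: minD_def)
    next
      assume "\<exists>k'<length G. lt k' k2 \<and> term_dvd (lpp_v ordM m (fst (G!k'))) (cp_sig ordR ordM m G k2 k)"
      then obtain k' where k': "k' < length G" "lt k' k2" "term_dvd (lpp_v ordM m (fst (G!k'))) (cp_sig ordR ordM m G k2 k)"
        by blast
      obtain a where a: "lpp_v ordM m (fst (G!k')) = Some (a, snd T')" "pp_dvd a ((L - lg2) + tv2)"
        using term_dvd_SomeD[of _ "(L - lg2) + tv2" "snd T'"] k'(3) cs2 by auto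
      have "pp_dvd ((L - lg2) + tv2) (fst T')" using fT'2 pp_dvd_plus by metis
      then have "inD T' k'" using a k'(1) pp_dvd_trans by (auto simp: inD_def)
      then show False using mk2 k'(2) by (auto simp: minD_def)
    qed
  qed
qed

end


context core begin

lemma good:
  "\<forall>u p. snd T < m \<longrightarrow> (u, p) \<in> Mmod m f \<longrightarrow> lpp_v ordM m u = Some T \<longrightarrow> p \<noteq> 0 \<longrightarrow>
    (\<exists>(v, g)\<in>set G. g \<noteq> 0 \<and> pp_dvd (the (lpp ordR g)) (the (lpp ordR p)) \<and>
       opt_le ordM (lpp_v ordM m (vscale (monom (the (lpp ordR p) - the (lpp ordR g)) 1) v)) (lpp_v ordM m u))"
proof (induction T rule: wf_induct_rule[OF wf_RM])
  case (1 T)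
  show ?case
  proof (intro allI impI)
    fix u p assume Tm: "snd T < m" and uM: "(u, p) \<in> Mmod m f" and uL: "lpp_v ordM m u = Some T"
      and p0: "p \<noteq> 0"
    show "\<exists>(v, g)\<in>set G. g \<noteq> 0 \<and> pp_dvd (the (lpp ordR g)) (the (lpp ordR p)) \<and>
       opt_le ordM (lpp_v ordM m (vscale (monom (the (lpp ordR p) - the (lpp ordR g)) 1) v)) (lpp_v ordM m u)"
    proof (cases "reg_red f T p")
      case True
      then obtain u' p' where u': "(u', p') \<in> Mmod m f" "opt_less ordM (lpp_v ordM m u') (Some T)"
          "p' \<noteq> 0" "lpp ordR p' = lpp ordR p"
        unfolding reg_red_def by blast
      obtain T' where T': "lpp_v ordM m u' = Some T'" using LV_Some_of_M[OF u'(1,3)] by blast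
      have oT: "ordM T' T" using u'(2) T' by (simp add: opt_less_def)
      have T'm: "snd T' < m" using LV_snd T' by blast
      have T'R: "(T', T) \<in> RM" using oT T'm Tm by (simp add: RM_def)
      from 1[OF T'R, rule_format, OF T'm u'(1) T' u'(3)] obtain v g where
        vg: "(v, g) \<in> set G" "g \<noteq> 0" "pp_dvd (the (lpp ordR g)) (the (lpp ordR p'))"
          "opt_le ordM (lpp_v ordM m (vscale (monom (the (lpp ordR p') - the (lpp ordR g)) 1) v)) (lpp_v ordM m u')"
        by blast
      define X where "X = lpp_v ordM m (vscale (monom (the (lpp ordR p) - the (lpp ordR g)) 1) v)"
      have X1: "opt_le ordM X (Some T')" using vg(4) u'(4) T' by (simp add: X_def)
      have "opt_le ordM X (Some T)"
      proof (cases X)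
        case None then show ?thesis by (simp add: opt_le_def opt_less_def)
      next
        case (Some x)
        have xm: "snd x < m" using LV_snd Some X_def by metis
        have "x = T' \<or> ordM x T'" using X1 Some by (auto simp: opt_le_def opt_less_def)
        then have "ordM x T" using oT M_trans[OF xm T'm Tm] by blast
        then show ?thesis using Some by (simp add: opt_le_def opt_less_def)
      qed
      then show ?thesis using vg u'(4) uL by (intro bexI[OF _ vg(1)]) (simp add: X_def)
    next
      case False
      obtain k where mk: "minD T k" using minD_ex[OF Tm] by blast
      have ik: "inD T k" using mk by (simp add: minD_def)
      define s where "s = sk T k"
      define g where "g = snd (G!k)"
      define V where "V = fst (G!k)"
      have EM: "(vscale (monom s 1) V, monom s 1 * g) \<in> Mmod m f"
        using inD_mult(1)[OF ik] by (simp add: s_def g_def V_def)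
      have EL: "lpp_v ordM m (vscale (monom s 1) V) = Some T"
        using inD_mult(2)[OF ik] by (simp add: s_def V_def)
      have g0: "g \<noteq> 0"
      proof
        assume "g = 0"
        then have "monom s 1 * g = 0" by simp
        then show False using uniq[OF uM EM uL EL p0 False] not_reg_red_zero[of f T] by simp
      qed
      have nr: "\<not> reg_red f T (monom s 1 * g)"
        using canon[rule_format, OF Tm mk] g0 by (simp add: s_def g_def)
      have e: "lpp ordR (monom s 1 * g) = lpp ordR p" using uniq[OF uM EM uL EL p0 False nr] by simp
      obtain lg where lg: "lpp ordR g = Some lg" using lpp_exists g0 by blast
      have lp: "lpp ordR p = Some (s + lg)" using e lpp_mult[of "1::'b" s g] lg by simp
      have kl: "k < length G" using ik by (simp add: inD_def)
      have "(V, g) \<in> set G" using kl by (simp add: V_def g_def)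
      moreover have "pp_dvd (the (lpp ordR g)) (the (lpp ordR p))" using lg lp by (simp add: pp_dvd_plus)
      moreover have "the (lpp ordR p) - the (lpp ordR g) = s" using lg lp by simp
      moreover have "opt_le ordM (lpp_v ordM m (vscale (monom s 1) V)) (lpp_v ordM m u)"
        using EL uL by (simp add: opt_le_def)
      ultimately show ?thesis using g0 by (intro bexI[of _ "(V, g)"]) simp_all
    qed
  qed
qed

lemma SGB: "is_SGB ordR ordM m f (set G)"
  unfolding is_SGB_def
proof (intro conjI ballI)
  show "finite (set G)" by simp
  show "set G \<subseteq> Mmod m f" by (rule GM)
  fix x assume x: "x \<in> Mmod m f"
  obtain u p where up: "x = (u, p)" by (cases x)
  show "case x of (u, p) \<Rightarrow> p \<noteq> 0 \<longrightarrow> (\<exists>(v, g)\<in>set G. g \<noteq> 0 \<and> pp_dvd (the (lpp ordR g)) (the (lpp ordR p)) \<and>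
           opt_le ordM (lpp_v ordM m (vscale (monom (the (lpp ordR p) - the (lpp ordR g)) 1) v)) (lpp_v ordM m u))"
    unfolding up prod.case
  proof (intro impI)
    assume p0: "p \<noteq> 0"
    have uM: "(u, p) \<in> Mmod m f" using x up by simp
    obtain T where T: "lpp_v ordM m u = Some T" using LV_Some_of_M[OF uM p0] by blast
    have Tm: "snd T < m" using LV_snd T by blast
    show "\<exists>(v, g)\<in>set G. g \<noteq> 0 \<and> pp_dvd (the (lpp ordR g)) (the (lpp ordR p)) \<and>
           opt_le ordM (lpp_v ordM m (vscale (monom (the (lpp ordR p) - the (lpp ordR g)) 1) v)) (lpp_v ordM m u)"
      using good[rule_format, OF Tm uM T p0] .
  qed
qed

end


lemma cong_prefix:
  assumes "G' = G @ zs" "a < length G" "b < length G"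
  shows "cp_mult ordR G' a b = cp_mult ordR G a b"
    and "cp_sig ordR ordM m G' a b = cp_sig ordR ordM m G a b"
    and "cp_regular ordR ordM m G' a b = cp_regular ordR ordM m G a b"
    and "orient ordR ordM m G' a b = orient ordR ordM m G a b"
    and "G' ! a = G ! a"
  using assms by (simp_all add: cp_mult_def cp_sig_def cp_regular_def orient_def nth_append)

lemma G_init_len: "length (G_init m f) \<ge> m"
  by (simp add: G_init_def)

lemma G_init_nth: "i < m \<Longrightarrow> G_init m f ! i = (unitv i, f i)"
  by (simp add: G_init_def nth_append)

lemma nth_in_suffix:
  assumes "xs = A @ B" "length A = m" "m \<le> i" "i < length xs"
  shows "xs ! i \<in> set B"
  using assms by (simp add: nth_append)

lemma G_init_syz:
  fixes f :: "nat \<Rightarrow> ('v,'a::field) mpoly"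
  assumes "m \<le> i" "i < length (G_init m f)"
  shows "snd (G_init m f ! i) = 0"
proof -
  have "G_init m f ! i \<in> set (concat (map (\<lambda>i. map (\<lambda>j. (vsub (vscale (f j) (unitv i)) (vscale (f i) (unitv j)), 0))
                         [Suc i..<m]) [0..<m]))"
    by (rule nth_in_suffix[OF G_init_def _ assms]) simp
  then show ?thesis by auto
qed

lemma G_init_M: "set (G_init m f) \<subseteq> Mmod m (f :: nat \<Rightarrow> ('v,'a::field) mpoly)"
proof
  fix x assume "x \<in> set (G_init m f)"
  then consider i where "i < m" "x = (unitv i, f i)"
    | i j where "i < m" "Suc i \<le> j" "j < m" "x = (vsub (vscale (f j) (unitv i)) (vscale (f i) (unitv j)), 0)"
    by (auto simp: G_init_def)
  then show "x \<in> Mmod m f"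
  proof cases
    case 1 then show ?thesis using M_unit by blast
  next
    case 2 then show ?thesis using M_syz[OF M_unit[of j m f], of i] by simp
  qed
qed

context sgb begin

lemma red1_M:
  fixes G :: "('v,'a::field) elem list"
  assumes "(red1 ordR ordM m G)\<^sup>*\<^sup>* x y" "set G \<subseteq> Mmod m f" "x \<in> Mmod m f"
  shows "y \<in> Mmod m f \<and> lpp_v ordM m (fst y) = lpp_v ordM m (fst x)"
  using assms(1)
proof (induction rule: rtranclp_induct)
  case base then show ?case using assms(3) by simp
next
  case (step y z)
  obtain k where k: "k < length G" and
    r: "let (v, g) = G ! k; (u, f) = y;
            c = lc ordR f / lc ordR g; t = the (lpp ordR f) - the (lpp ordR g)
        in g \<noteq> 0 \<and> f \<noteq> 0 \<and> pp_dvd (the (lpp ordR g)) (the (lpp ordR f)) \<and>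
           lpp_v ordM m (vsub u (vscale (monom t c) v)) = lpp_v ordM m u \<and>
           z = (vsub u (vscale (monom t c) v), f - monom t c * g)"
    using step.hyps(2) unfolding red1_def by blast
  obtain v g where vg: "G ! k = (v, g)" by (cases "G ! k")
  obtain u p where up: "y = (u, p)" by (cases y)
  define c where "c = lc ordR p / lc ordR g"
  define t where "t = the (lpp ordR p) - the (lpp ordR g)"
  have z: "z = (vsub u (vscale (monom t c) v), p - monom t c * g)"
    and zl: "lpp_v ordM m (vsub u (vscale (monom t c) v)) = lpp_v ordM m u"
    using r vg up by (simp_all add: Let_def c_def t_def)
  have "G ! k \<in> set G" using k by simp
  then have "(v, g) \<in> Mmod m f" using vg assms(2) by auto
  moreover have "(u, p) \<in> Mmod m f" using step.IH up by simp
  ultimately have "z \<in> Mmod m f" unfolding z by (intro M_sub)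
  then show ?case using step.IH up z zl by simp
qed

lemma spoly_M:
  fixes G :: "('v,'a::field) elem list"
  assumes "set G \<subseteq> Mmod m f" "a < length G" "b < length G"
  shows "spoly ordR G a b \<in> Mmod m f"
proof -
  have ma: "(fst (G!a), snd (G!a)) \<in> Mmod m f" and mb: "(fst (G!b), snd (G!b)) \<in> Mmod m f"
    using assms nth_mem by fastforce+
  show ?thesis unfolding spoly_def Let_def
    using M_sub[OF M_scale[OF ma] mb] by simp
qed

lemma spoly_LV:
  fixes G :: "('v,'a::field) elem list"
  assumes "cp_regular ordR ordM m G a b"
  shows "lpp_v ordM m (fst (spoly ordR G a b)) = cp_sig ordR ordM m G a b"
proof -
  obtain T where T: "cp_sig ordR ordM m G a b = Some T"
    using assms by (cases "cp_sig ordR ordM m G a b") (auto simp: cp_regular_def opt_less_def split: option.splits)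
  define c where "c = lc ordR (snd (G ! a)) / lc ordR (snd (G ! b))"
  define V where "V = vscale (monom (cp_mult ordR G b a) c) (fst (G ! b))"
  have "opt_less ordM (lpp_v ordM m V) (Some T)"
  proof (cases "c = 0")
    case True then show ?thesis by (simp add: V_def LV_vscale_zero opt_less_def)
  next
    case False
    have "lpp_v ordM m V = cp_sig ordR ordM m G b a"
      using LV_vscale[OF False] LV_vscale[of "1::'a"] by (simp add: V_def cp_sig_def)
    then show ?thesis using assms T by (simp add: cp_regular_def)
  qed
  moreover have "lpp_v ordM m (vscale (monom (cp_mult ordR G a b) 1) (fst (G ! a))) = Some T"
    using T by (simp add: cp_sig_def)
  ultimately have "lpp_v ordM m (vsub (vscale (monom (cp_mult ordR G a b) 1) (fst (G ! a))) V) = Some T"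
    by (rule LV_vsub_gt[rotated])
  then show ?thesis using T by (simp add: spoly_def Let_def V_def c_def)
qed

lemma orient_reg:
  fixes G :: "('v,'a::field) elem list"
  assumes "cp_regular ordR ordM m G a b"
  shows "orient ordR ordM m G a b = (a, b)" and "orient ordR ordM m G b a = (a, b)"
proof -
  obtain T where T: "cp_sig ordR ordM m G a b = Some T"
    using assms by (cases "cp_sig ordR ordM m G a b") (auto simp: cp_regular_def opt_less_def split: option.splits)
  have Tm: "snd T < m" using T LV_snd by (simp add: cp_sig_def)
  have ol: "opt_less ordM (cp_sig ordR ordM m G b a) (Some T)" using assms T by (simp add: cp_regular_def)
  show "orient ordR ordM m G a b = (a, b)" using ol T by (simp add: orient_def opt_le_def)
  have "\<not> opt_le ordM (Some T) (cp_sig ordR ordM m G b a)"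
  proof (cases "cp_sig ordR ordM m G b a")
    case None then show ?thesis by (simp add: opt_le_def opt_less_def)
  next
    case (Some y)
    have ym: "snd y < m" using Some LV_snd by (simp add: cp_sig_def)
    have yT: "ordM y T" using ol Some by (simp add: opt_less_def)
    have "y \<noteq> T" using yT M_irrefl[OF Tm] by blast
    moreover have "\<not> ordM T y" using yT M_trans[OF Tm ym Tm] M_irrefl[OF Tm] by blast
    ultimately show ?thesis using Some by (auto simp: opt_le_def opt_less_def)
  qed
  then show "orient ordR ordM m G b a = (a, b)" using T by (simp add: orient_def)
qed

end


lemma ifD1: "(if P then A else B) \<Longrightarrow> P \<Longrightarrow> A" by simp
lemma ifD2: "(if P then A else B) \<Longrightarrow> \<not> P \<Longrightarrow> B" by simp

context sgb begin

lemma step_cases: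
  fixes s s' :: "('v,'a::field) gstate"
  assumes st: "gbgc_step ordR ordM m f s (a, b) s'"
  shows "(a, b) \<in> gCP s \<and>
    ((cp_regular ordR ordM m (gG s) a b \<and> \<not> cp_rewritable ordR ordM m (gG s) (glt s) a b \<and>
      (\<exists>w h. (red1 ordR ordM m (gG s))\<^sup>*\<^sup>* (spoly ordR (gG s) a b) (w, h) \<and>
         gG s' = gG s @ [(w, h)] @
            (if h \<noteq> 0 then map (\<lambda>i. (vsub (vscale h (unitv i)) (vscale (f i) w), 0)) [0..<m] else []) \<and>
         gCP s' = (gCP s - {(a, b)}) \<union>
            (if h \<noteq> 0 then {orient ordR ordM m (gG s') (length (gG s)) j | j.
                               j < length (gG s) \<and> snd (gG s ! j) \<noteq> 0} else {}) \<and>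
         spo_on (length (gG s')) (glt s') \<and>
         (\<forall>x y. x < length (gG s) \<longrightarrow> y < length (gG s) \<longrightarrow> glt s' x y = glt s x y)))
    \<or> (\<not> (cp_regular ordR ordM m (gG s) a b \<and> \<not> cp_rewritable ordR ordM m (gG s) (glt s) a b) \<and>
       gG s' = gG s \<and> gCP s' = gCP s - {(a, b)} \<and> glt s' = glt s))"
proof (cases "cp_regular ordR ordM m (gG s) a b \<and> \<not> cp_rewritable ordR ordM m (gG s) (glt s) a b")
  case True
  have "(a, b) \<in> gCP s \<and> (if cp_regular ordR ordM m (gG s) a b \<and> \<not> cp_rewritable ordR ordM m (gG s) (glt s) a b then
         (\<exists>w h. (red1 ordR ordM m (gG s))\<^sup>*\<^sup>* (spoly ordR (gG s) a b) (w, h) \<and>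
                \<not> (\<exists>y. red1 ordR ordM m (gG s) (w, h) y) \<and>
                gG s' = gG s @ [(w, h)] @
                   (if h \<noteq> 0 then map (\<lambda>i. (vsub (vscale h (unitv i)) (vscale (f i) w), 0)) [0..<m]
                    else []) \<and>
                gCP s' = (gCP s - {(a, b)}) \<union>
                   (if h \<noteq> 0 then {orient ordR ordM m (gG s') (length (gG s)) j | j.
                                      j < length (gG s) \<and> snd (gG s ! j) \<noteq> 0}
                    else {}) \<and>
                spo_on (length (gG s')) (glt s') \<and>
                (\<forall>x y. x < length (gG s) \<longrightarrow> y < length (gG s) \<longrightarrow> glt s' x y = glt s x y))
       else s' = (gG s, gCP s - {(a, b)}, glt s))"
    using st unfolding gbgc_step_def Let_def prod.case .
  then have h1: "(a, b) \<in> gCP s" by (rule conjunct1)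
  from h1 ifD1[OF conjunct2[OF \<open>(a, b) \<in> gCP s \<and> _\<close>] True] have "(a, b) \<in> gCP s \<and> (\<exists>w h. (red1 ordR ordM m (gG s))\<^sup>*\<^sup>* (spoly ordR (gG s) a b) (w, h) \<and>
                \<not> (\<exists>y. red1 ordR ordM m (gG s) (w, h) y) \<and>
                gG s' = gG s @ [(w, h)] @
                   (if h \<noteq> 0 then map (\<lambda>i. (vsub (vscale h (unitv i)) (vscale (f i) w), 0)) [0..<m]
                    else []) \<and>
                gCP s' = (gCP s - {(a, b)}) \<union>
                   (if h \<noteq> 0 then {orient ordR ordM m (gG s') (length (gG s)) j | j.
                                      j < length (gG s) \<and> snd (gG s ! j) \<noteq> 0}
                    else {}) \<and>
                spo_on (length (gG s')) (glt s') \<and>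
                (\<forall>x y. x < length (gG s) \<longrightarrow> y < length (gG s) \<longrightarrow> glt s' x y = glt s x y))"
    by (rule conjI)
  then show ?thesis using True by blast
next
  case False
  then have "(a, b) \<in> gCP s \<and> s' = (gG s, gCP s - {(a, b)}, glt s)"
    using st unfolding gbgc_step_def Let_def prod.case by simp
  then show ?thesis using False by (simp add: gG_def gCP_def glt_def)
qed

lemma step_basic:
  fixes s s' :: "('v,'a::field) gstate"
  assumes st: "gbgc_step ordR ordM m f s ab s'"
  shows "ab \<in> gCP s"
    and "\<exists>zs. gG s' = gG s @ zs"
    and "\<forall>x y. x < length (gG s) \<longrightarrow> y < length (gG s) \<longrightarrow> glt s' x y = glt s x y"
    and "gCP s - {ab} \<subseteq> gCP s'"
    and "spo_on (length (gG s)) (glt s) \<Longrightarrow> spo_on (length (gG s')) (glt s')"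
proof -
  obtain a b where ab: "ab = (a, b)" by (cases ab)
  note sc = step_cases[OF st[unfolded ab]]
  show "ab \<in> gCP s" using sc ab by simp
  have "(\<exists>zs. gG s' = gG s @ zs) \<and> (\<forall>x y. x < length (gG s) \<longrightarrow> y < length (gG s) \<longrightarrow> glt s' x y = glt s x y)
     \<and> (gCP s - {ab} \<subseteq> gCP s') \<and> (spo_on (length (gG s)) (glt s) \<longrightarrow> spo_on (length (gG s')) (glt s'))"
  proof (cases "cp_regular ordR ordM m (gG s) a b \<and> \<not> cp_rewritable ordR ordM m (gG s) (glt s) a b")
    case True
    then obtain w h where wh:
      "gG s' = gG s @ [(w, h)] @
            (if h \<noteq> 0 then map (\<lambda>i. (vsub (vscale h (unitv i)) (vscale (f i) w), 0)) [0..<m] else [])"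
      "gCP s' = (gCP s - {(a, b)}) \<union>
            (if h \<noteq> 0 then {orient ordR ordM m (gG s') (length (gG s)) j | j.
                               j < length (gG s) \<and> snd (gG s ! j) \<noteq> 0} else {})"
      "spo_on (length (gG s')) (glt s')"
      "\<forall>x y. x < length (gG s) \<longrightarrow> y < length (gG s) \<longrightarrow> glt s' x y = glt s x y"
      using sc by blast
    have "gCP s - {ab} \<subseteq> gCP s'" unfolding wh(2) ab by blast
    then show ?thesis using wh(1,3,4) by blast
  next
    case False
    then have "gG s' = gG s \<and> gCP s' = gCP s - {(a, b)} \<and> glt s' = glt s" using sc by blast
    then show ?thesis using ab by simp
  qed
  then show "\<exists>zs. gG s' = gG s @ zs"
    and "\<forall>x y. x < length (gG s) \<longrightarrow> y < length (gG s) \<longrightarrow> glt s' x y = glt s x y"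
    and "gCP s - {ab} \<subseteq> gCP s'"
    and "spo_on (length (gG s)) (glt s) \<Longrightarrow> spo_on (length (gG s')) (glt s')" by blast+
qed

lemma step_inv:
  fixes s s' :: "('v,'a::field) gstate"
  assumes st: "gbgc_step ordR ordM m f s ab s'" and GM: "set (gG s) \<subseteq> Mmod m f"
    and CPb: "\<forall>p\<in>gCP s. fst p < length (gG s) \<and> snd p < length (gG s)"
  shows "set (gG s') \<subseteq> Mmod m f \<and> (\<forall>p\<in>gCP s'. fst p < length (gG s') \<and> snd p < length (gG s'))"
proof -
  obtain a b where ab: "ab = (a, b)" by (cases ab)
  note sc = step_cases[OF st[unfolded ab]]
  have abl: "a < length (gG s)" "b < length (gG s)" using sc CPb by auto
  show ?thesis
  proof (cases "cp_regular ordR ordM m (gG s) a b \<and> \<not> cp_rewritable ordR ordM m (gG s) (glt s) a b")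
    case True
    then obtain w h where wh: "(red1 ordR ordM m (gG s))\<^sup>*\<^sup>* (spoly ordR (gG s) a b) (w, h)"
      "gG s' = gG s @ [(w, h)] @
            (if h \<noteq> 0 then map (\<lambda>i. (vsub (vscale h (unitv i)) (vscale (f i) w), 0)) [0..<m] else [])"
      "gCP s' = (gCP s - {(a, b)}) \<union>
            (if h \<noteq> 0 then {orient ordR ordM m (gG s') (length (gG s)) j | j.
                               j < length (gG s) \<and> snd (gG s ! j) \<noteq> 0} else {})"
      using sc by blast
    have whM: "(w, h) \<in> Mmod m f" using red1_M[OF wh(1) GM spoly_M[OF GM abl]] by simp
    have "set (gG s') \<subseteq> Mmod m f"
      using GM whM M_syz[OF whM] unfolding wh(2) by auto
    moreover have "\<forall>p\<in>gCP s'. fst p < length (gG s') \<and> snd p < length (gG s')"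
    proof
      fix p assume p: "p \<in> gCP s'"
      have len: "length (gG s) < length (gG s')" using wh(2) by simp
      show "fst p < length (gG s') \<and> snd p < length (gG s')"
      proof (cases "p \<in> gCP s")
        case True then show ?thesis using CPb len by auto
      next
        case False
        then obtain j where "j < length (gG s)" "p = orient ordR ordM m (gG s') (length (gG s)) j"
          using p wh(3) by (auto split: if_splits)
        then show ?thesis using len by (auto simp: orient_def)
      qed
    qed
    ultimately show ?thesis by blast
  next
    case False
    then have e: "gG s' = gG s \<and> gCP s' = gCP s - {(a, b)}" using sc by blast
    then have "\<forall>p\<in>gCP s'. fst p < length (gG s') \<and> snd p < length (gG s')" using CPb by simp
    then show ?thesis using GM e by simp
  qed
qed

lemma step_grow:
  fixes s s' :: "('v,'a::field) gstate"
  assumes st: "gbgc_step ordR ordM m f s ab s'"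
  shows "length (gG s') = length (gG s) \<or>
    (length (gG s) < length (gG s') \<and>
     (snd (gG s' ! length (gG s)) \<noteq> 0 \<longrightarrow>
        (\<forall>j<length (gG s). snd (gG s ! j) \<noteq> 0 \<longrightarrow> orient ordR ordM m (gG s') (length (gG s)) j \<in> gCP s')) \<and>
     (\<forall>i. length (gG s) < i \<longrightarrow> i < length (gG s') \<longrightarrow> snd (gG s' ! i) = 0))"
proof -
  obtain a b where ab: "ab = (a, b)" by (cases ab)
  note sc = step_cases[OF st[unfolded ab]]
  show ?thesis
  proof (cases "cp_regular ordR ordM m (gG s) a b \<and> \<not> cp_rewritable ordR ordM m (gG s) (glt s) a b")
    case True
    then obtain w h where wh:
      "gG s' = gG s @ [(w, h)] @
            (if h \<noteq> 0 then map (\<lambda>i. (vsub (vscale h (unitv i)) (vscale (f i) w), 0)) [0..<m] else [])"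
      "gCP s' = (gCP s - {(a, b)}) \<union>
            (if h \<noteq> 0 then {orient ordR ordM m (gG s') (length (gG s)) j | j.
                               j < length (gG s) \<and> snd (gG s ! j) \<noteq> 0} else {})"
      using sc by blast
    have n: "gG s' ! length (gG s) = (w, h)" using wh(1) by (simp add: nth_append)
    have A: "snd (gG s' ! length (gG s)) \<noteq> 0 \<longrightarrow>
        (\<forall>j<length (gG s). snd (gG s ! j) \<noteq> 0 \<longrightarrow> orient ordR ordM m (gG s') (length (gG s)) j \<in> gCP s')"
      using wh(2) n by auto
    have B: "\<forall>i. length (gG s) < i \<longrightarrow> i < length (gG s') \<longrightarrow> snd (gG s' ! i) = 0"
    proof (intro allI impI)
      fix i assume i: "length (gG s) < i" "i < length (gG s')"
      show "snd (gG s' ! i) = 0"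
      proof (cases "h = 0")
        case True then show ?thesis using i wh(1) by simp
      next
        case False
        have "gG s' ! i = map (\<lambda>i. (vsub (vscale h (unitv i)) (vscale (f i) w), 0)) [0..<m] ! (i - Suc (length (gG s)))"
          using wh(1) False i(1) by (simp add: nth_append)
        moreover have "i - Suc (length (gG s)) < m" using wh(1) False i by simp
        ultimately show ?thesis by simp
      qed
    qed
    show ?thesis using A B wh(1) by simp
  next
    case False
    then have e: "gG s' = gG s" using sc by blast
    then show ?thesis by simp
  qed
qed

lemma step_proc:
  fixes s s' :: "('v,'a::field) gstate"
  assumes st: "gbgc_step ordR ordM m f s (a, b) s'"
    and "cp_regular ordR ordM m (gG s) a b" "\<not> cp_rewritable ordR ordM m (gG s) (glt s) a b"
  shows "\<exists>w h. (red1 ordR ordM m (gG s))\<^sup>*\<^sup>* (spoly ordR (gG s) a b) (w, h) \<and>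
     length (gG s) < length (gG s') \<and> gG s' ! length (gG s) = (w, h)"
proof -
  note sc = step_cases[OF st]
  then obtain w h where wh: "(red1 ordR ordM m (gG s))\<^sup>*\<^sup>* (spoly ordR (gG s) a b) (w, h)"
      "gG s' = gG s @ [(w, h)] @
            (if h \<noteq> 0 then map (\<lambda>i. (vsub (vscale h (unitv i)) (vscale (f i) w), 0)) [0..<m] else [])"
    using assms(2,3) by blast
  then show ?thesis by (intro exI[of _ w] exI[of _ h]) (simp add: nth_append)
qed

end


locale runl = sgb ordR ordM m
  for ordR :: "('v::finite) pp \<Rightarrow> 'v pp \<Rightarrow> bool" and ordM :: "'v pp \<times> nat \<Rightarrow> 'v pp \<times> nat \<Rightarrow> bool"
    and m :: nat +
  fixes f :: "nat \<Rightarrow> ('v,'b::field) mpoly" and ss :: "('v,'b) gstate list" and cps :: "(nat \<times> nat) list"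
  assumes run: "gbgc_run ordR ordM m f ss cps" and adm: "gbgc_admissible ordR ordM m ss cps"
begin

abbreviation "N \<equiv> length cps"
abbreviation "Gs k \<equiv> gG (ss ! k)"
abbreviation "CPs k \<equiv> gCP (ss ! k)"
abbreviation "Ls k \<equiv> glt (ss ! k)"

lemma len_ss: "length ss = Suc N" using run by (simp add: gbgc_run_def)
lemma stp: "k < N \<Longrightarrow> gbgc_step ordR ordM m f (ss ! k) (cps ! k) (ss ! Suc k)"
  using run by (simp add: gbgc_run_def)
lemma ini: "gbgc_init ordR ordM m f (ss ! 0)" using run by (simp add: gbgc_run_def)
lemma last_ss: "last ss = ss ! N"
proof -
  have "ss \<noteq> []" using len_ss by auto
  then show ?thesis using len_ss by (simp add: last_conv_nth)
qed

lemma fin: "CPs N = {}"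
proof -
  have "last ss = ss ! N" by (rule last_ss)
  then show ?thesis using run by (simp add: gbgc_run_def)
qed
lemma G0: "Gs 0 = G_init m f" using ini by (simp add: gbgc_init_def)

lemma inv: "k \<le> N \<Longrightarrow> set (Gs k) \<subseteq> Mmod m f \<and> spo_on (length (Gs k)) (Ls k) \<and>
    (\<forall>p\<in>CPs k. fst p < length (Gs k) \<and> snd p < length (Gs k))"
proof (induction k)
  case 0
  have "\<forall>p\<in>CPs 0. fst p < length (Gs 0) \<and> snd p < length (Gs 0)"
  proof
    fix p assume "p \<in> CPs 0"
    then obtain i j where "i < j" "j < m" "p = orient ordR ordM m (G_init m f) i j"
      using ini by (auto simp: gbgc_init_def CP_init_def)
    then show "fst p < length (Gs 0) \<and> snd p < length (Gs 0)"
      using G_init_len[of m f] G0 by (auto simp: orient_def)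
  qed
  then show ?case using ini G_init_M[of m f] by (simp add: gbgc_init_def)
next
  case (Suc k)
  then have IH: "set (Gs k) \<subseteq> Mmod m f \<and> spo_on (length (Gs k)) (Ls k) \<and>
    (\<forall>p\<in>CPs k. fst p < length (Gs k) \<and> snd p < length (Gs k))" by simp
  have st: "gbgc_step ordR ordM m f (ss ! k) (cps ! k) (ss ! Suc k)" using stp Suc.prems by simp
  show ?case using step_inv[OF st] step_basic(5)[OF st] IH by blast
qed

lemma mono:
  assumes "k \<le> k'" "k' \<le> N"
  shows "(\<exists>zs. Gs k' = Gs k @ zs) \<and> (\<forall>x y. x < length (Gs k) \<longrightarrow> y < length (Gs k) \<longrightarrow> Ls k' x y = Ls k x y)"
  using assms
proof (induction k' rule: dec_induct)
  case base then show ?case by simp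
next
  case (step n)
  have st: "gbgc_step ordR ordM m f (ss ! n) (cps ! n) (ss ! Suc n)" using stp step by simp
  obtain zs where zs: "Gs n = Gs k @ zs" using step by auto
  obtain zs' where zs': "Gs (Suc n) = Gs n @ zs'" using step_basic(2)[OF st] by blast
  have l: "\<forall>x y. x < length (Gs k) \<longrightarrow> y < length (Gs k) \<longrightarrow> Ls n x y = Ls k x y" using step by auto
  have l2: "\<forall>x y. x < length (Gs n) \<longrightarrow> y < length (Gs n) \<longrightarrow> Ls (Suc n) x y = Ls n x y"
    using step_basic(3)[OF st] .
  have "Gs (Suc n) = Gs k @ (zs @ zs')" using zs zs' by simp
  moreover have "\<forall>x y. x < length (Gs k) \<longrightarrow> y < length (Gs k) \<longrightarrow> Ls (Suc n) x y = Ls k x y"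
    using l l2 zs by simp
  ultimately show ?case by blast
qed

lemma processed: "k \<le> N \<Longrightarrow> p \<in> CPs k \<Longrightarrow> \<exists>j. k \<le> j \<and> j < N \<and> cps ! j = p"
proof (induction "N - k" arbitrary: k)
  case 0
  then have "k = N" by simp
  then show ?case using 0 fin by simp
next
  case (Suc d)
  then have kN: "k < N" by simp
  show ?case
  proof (cases "cps ! k = p")
    case True then show ?thesis using kN by blast
  next
    case False
    have st: "gbgc_step ordR ordM m f (ss ! k) (cps ! k) (ss ! Suc k)" using stp kN by simp
    have "p \<in> CPs (Suc k)" using step_basic(4)[OF st] Suc.prems False by blast
    moreover have "d = N - Suc k" using Suc.hyps(2) by simp
    ultimately obtain j where "Suc k \<le> j" "j < N" "cps ! j = p" using Suc.hyps(1)[of "Suc k"] kN by auto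
    then show ?thesis by (intro exI[of _ j]) simp
  qed
qed

lemma find_step: "length (Gs 0) \<le> b \<Longrightarrow> b < length (Gs K) \<Longrightarrow> K \<le> N \<Longrightarrow>
    \<exists>j<K. length (Gs j) \<le> b \<and> b < length (Gs (Suc j))"
proof (induction K)
  case 0 then show ?case by simp
next
  case (Suc K)
  show ?case
  proof (cases "b < length (Gs K)")
    case True then show ?thesis using Suc by (metis Suc_leD less_SucI)
  next
    case False then show ?thesis using Suc.prems by auto
  qed
qed

lemma coverage:
  assumes "a < b" "b < length (Gs N)" "snd (Gs N ! a) \<noteq> 0" "snd (Gs N ! b) \<noteq> 0"
  shows "\<exists>k\<le>N. orient ordR ordM m (Gs N) a b \<in> CPs k \<or> orient ordR ordM m (Gs N) b a \<in> CPs k"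
proof -
  obtain zs0 where zs0: "Gs N = G_init m f @ zs0" using mono[of 0 N] G0 by auto
  show ?thesis
  proof (cases "b < m")
    case True
    have am: "a < m" using True assms(1) by simp
    have lm: "m \<le> length (G_init m f)" by (rule G_init_len)
    have "snd (Gs N ! a) = f a" "snd (Gs N ! b) = f b"
      using zs0 am True lm G_init_nth[of a m f] G_init_nth[of b m f] by (simp_all add: nth_append)
    then have "f a \<noteq> 0" "f b \<noteq> 0" using assms(3,4) by simp_all
    then have "orient ordR ordM m (G_init m f) a b \<in> CP_init ordR ordM m f"
      using assms(1) True unfolding CP_init_def by (intro CollectI exI[of _ a] exI[of _ b]) simp
    moreover have "orient ordR ordM m (Gs N) a b = orient ordR ordM m (G_init m f) a b"
      using cong_prefix(4)[OF zs0] am True lm by simp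
    ultimately show ?thesis using ini by (intro exI[of _ 0]) (simp add: gbgc_init_def)
  next
    case False
    show ?thesis
    proof (cases "b < length (G_init m f)")
      case True
      then have "snd (Gs N ! b) = 0" using zs0 G_init_syz[of m b f] False by (simp add: nth_append)
      then show ?thesis using assms(4) by simp
    next
      case b0: False
      obtain j where j: "j < N" "length (Gs j) \<le> b" "b < length (Gs (Suc j))"
        using find_step[of b N] b0 G0 assms(2) by auto
      have st: "gbgc_step ordR ordM m f (ss ! j) (cps ! j) (ss ! Suc j)" using stp j(1) by simp
      obtain zs where zs: "Gs N = Gs (Suc j) @ zs" using mono[of "Suc j" N] j(1) by auto
      obtain zs' where zs': "Gs (Suc j) = Gs j @ zs'" using step_basic(2)[OF st] by blast
      have gr: "length (Gs j) < length (Gs (Suc j)) \<and>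
        (snd (Gs (Suc j) ! length (Gs j)) \<noteq> 0 \<longrightarrow>
          (\<forall>j'<length (Gs j). snd (Gs j ! j') \<noteq> 0 \<longrightarrow>
              orient ordR ordM m (Gs (Suc j)) (length (Gs j)) j' \<in> CPs (Suc j))) \<and>
        (\<forall>i. length (Gs j) < i \<longrightarrow> i < length (Gs (Suc j)) \<longrightarrow> snd (Gs (Suc j) ! i) = 0)"
        using step_grow[OF st] j by auto
      have eqb: "Gs N ! b = Gs (Suc j) ! b" using zs j(3) by (simp add: nth_append)
      have bj: "b = length (Gs j)"
      proof (rule ccontr)
        assume "b \<noteq> length (Gs j)"
        then have "length (Gs j) < b" using j(2) by simp
        then have "snd (Gs (Suc j) ! b) = 0" using gr j(3) by blast
        then show False using assms(4) eqb by simp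
      qed
      have aj: "a < length (Gs j)" using assms(1) bj by simp
      have "snd (Gs j ! a) = snd (Gs N ! a)" using zs zs' aj by (simp add: nth_append)
      then have "orient ordR ordM m (Gs (Suc j)) b a \<in> CPs (Suc j)"
        using gr assms(3,4) eqb bj aj by auto
      moreover have "orient ordR ordM m (Gs N) b a = orient ordR ordM m (Gs (Suc j)) b a"
        using cong_prefix(4)[OF zs] j(3) assms(1) by simp
      ultimately show ?thesis using j(1) by (intro exI[of _ "Suc j"]) simp
    qed
  qed
qed

lemma reg_ne:
  fixes G :: "('v,'b) elem list"
  assumes "cp_regular ordR ordM m G a b" shows "a \<noteq> b"
proof
  assume "a = b"
  then have r: "opt_less ordM (cp_sig ordR ordM m G a a) (cp_sig ordR ordM m G a a)"
    using assms by (simp add: cp_regular_def)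
  show False
  proof (cases "cp_sig ordR ordM m G a a")
    case None then show ?thesis using r by (simp add: opt_less_def)
  next
    case (Some T)
    then have "snd T < m" using LV_snd by (simp add: cp_sig_def)
    then show ?thesis using r Some M_irrefl by (simp add: opt_less_def)
  qed
qed

lemma pair_prop:
  assumes al: "a < length (Gs N)" and bl: "b < length (Gs N)"
    and ga: "snd (Gs N ! a) \<noteq> 0" and gb: "snd (Gs N ! b) \<noteq> 0"
    and reg: "cp_regular ordR ordM m (Gs N) a b"
  shows "(\<exists>k'<length (Gs N). Ls N k' a \<and> term_dvd (lpp_v ordM m (fst (Gs N ! k'))) (cp_sig ordR ordM m (Gs N) a b)) \<or>
       (\<exists>k'<length (Gs N). Ls N k' b \<and> term_dvd (lpp_v ordM m (fst (Gs N ! k'))) (cp_sig ordR ordM m (Gs N) b a))"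
proof -
  have ne: "a \<noteq> b" using reg_ne[OF reg] .
  have o1: "orient ordR ordM m (Gs N) a b = (a, b)" and o2: "orient ordR ordM m (Gs N) b a = (a, b)"
    using orient_reg[OF reg] by simp_all
  have "\<exists>k\<le>N. (a, b) \<in> CPs k"
  proof (cases "a < b")
    case True then show ?thesis using coverage[OF True bl ga gb] o1 o2 by auto
  next
    case False
    then have "b < a" using ne by simp
    then show ?thesis using coverage[OF \<open>b < a\<close> al gb ga] o1 o2 by auto
  qed
  then obtain k where k: "k \<le> N" "(a, b) \<in> CPs k" by blast
  obtain j where j: "j < N" "cps ! j = (a, b)" using processed[OF k] by blast
  have st: "gbgc_step ordR ordM m f (ss ! j) (a, b) (ss ! Suc j)" using stp[OF j(1)] j(2) by simp
  have abj: "(a, b) \<in> CPs j" using step_basic(1)[OF st] .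
  have ij: "set (Gs j) \<subseteq> Mmod m f" "\<forall>p\<in>CPs j. fst p < length (Gs j) \<and> snd p < length (Gs j)"
    using inv[of j] j(1) by simp_all
  have ajl: "a < length (Gs j)" "b < length (Gs j)" using ij(2) abj by auto
  obtain zs where zs: "Gs N = Gs j @ zs" using mono[of j N] j(1) by auto
  have lN: "\<forall>x y. x < length (Gs j) \<longrightarrow> y < length (Gs j) \<longrightarrow> Ls N x y = Ls j x y"
    using mono[of j N] j(1) by simp
  have regj: "cp_regular ordR ordM m (Gs j) a b" using reg cong_prefix(3)[OF zs ajl] by simp
  have sig1: "cp_sig ordR ordM m (Gs N) a b = cp_sig ordR ordM m (Gs j) a b" using cong_prefix(2)[OF zs ajl] .
  have sig2: "cp_sig ordR ordM m (Gs N) b a = cp_sig ordR ordM m (Gs j) b a" using cong_prefix(2)[OF zs ajl(2,1)] .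
  show ?thesis
  proof (cases "cp_rewritable ordR ordM m (Gs j) (Ls j) a b")
    case True
    then have "mult_rewritable ordM m (Gs j) (Ls j) (cp_mult ordR (Gs j) a b) a \<or>
               mult_rewritable ordM m (Gs j) (Ls j) (cp_mult ordR (Gs j) b a) b"
      by (simp add: cp_rewritable_def)
    then show ?thesis
    proof
      assume "mult_rewritable ordM m (Gs j) (Ls j) (cp_mult ordR (Gs j) a b) a"
      then obtain k' where k': "k' < length (Gs j)"
        "term_dvd (lpp_v ordM m (fst (Gs j ! k'))) (cp_sig ordR ordM m (Gs j) a b)" "Ls j k' a"
        by (auto simp: mult_rewritable_def cp_sig_def)
      have "k' < length (Gs N)" "Gs N ! k' = Gs j ! k'" "Ls N k' a" using zs k' lN ajl
        by (simp_all add: nth_append)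
      then show ?thesis using k' sig1 by (intro disjI1 exI[of _ k']) simp
    next
      assume "mult_rewritable ordM m (Gs j) (Ls j) (cp_mult ordR (Gs j) b a) b"
      then obtain k' where k': "k' < length (Gs j)"
        "term_dvd (lpp_v ordM m (fst (Gs j ! k'))) (cp_sig ordR ordM m (Gs j) b a)" "Ls j k' b"
        by (auto simp: mult_rewritable_def cp_sig_def)
      have "k' < length (Gs N)" "Gs N ! k' = Gs j ! k'" "Ls N k' b" using zs k' lN ajl
        by (simp_all add: nth_append)
      then show ?thesis using k' sig2 by (intro disjI2 exI[of _ k']) simp
    qed
  next
    case False
    obtain w h where wh: "(red1 ordR ordM m (Gs j))\<^sup>*\<^sup>* (spoly ordR (Gs j) a b) (w, h)"
      "length (Gs j) < length (Gs (Suc j))" "Gs (Suc j) ! length (Gs j) = (w, h)"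
      using step_proc[OF st regj False] by blast
    have admj: "Ls (Suc j) (length (Gs j)) a"
      using adm j regj False unfolding gbgc_admissible_def by (auto simp: Let_def)
    obtain zs2 where zs2: "Gs N = Gs (Suc j) @ zs2" using mono[of "Suc j" N] j(1) by auto
    have lN2: "\<forall>x y. x < length (Gs (Suc j)) \<longrightarrow> y < length (Gs (Suc j)) \<longrightarrow> Ls N x y = Ls (Suc j) x y"
      using mono[of "Suc j" N] j(1) by simp
    define n where "n = length (Gs j)"
    have nl: "n < length (Gs N)" using zs2 wh(2) by (simp add: n_def)
    have nG: "Gs N ! n = (w, h)" using zs2 wh(2,3) by (simp add: n_def nth_append)
    have nlt: "Ls N n a" using lN2 admj wh(2) ajl by (simp add: n_def)
    have "lpp_v ordM m w = lpp_v ordM m (fst (spoly ordR (Gs j) a b))"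
      using red1_M[OF wh(1) ij(1) spoly_M[OF ij(1) ajl]] by simp
    also have "\<dots> = cp_sig ordR ordM m (Gs j) a b" by (rule spoly_LV[OF regj])
    finally have wL: "lpp_v ordM m w = cp_sig ordR ordM m (Gs N) a b" using sig1 by simp
    have "term_dvd (cp_sig ordR ordM m (Gs N) a b) (cp_sig ordR ordM m (Gs N) a b)"
      by (cases "cp_sig ordR ordM m (Gs N) a b") (auto simp: term_dvd_def pp_dvd_refl)
    then show ?thesis using nl nG nlt wL by (intro disjI1 exI[of _ n]) simp
  qed
qed

lemma final: "is_SGB ordR ordM m f (set (gG (last ss)))"
proof -
  have lst: "last ss = ss ! N" by (rule last_ss)
  obtain zs0 where zs0: "Gs N = G_init m f @ zs0" using mono[of 0 N] G0 by auto
  have "core ordR ordM m f (Gs N) (Ls N)"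
  proof (intro core.intro core_axioms.intro)
    show "sgb ordR ordM m" by (rule sgb_axioms)
    show "set (Gs N) \<subseteq> Mmod m f" using inv[of N] by simp
    show "spo_on (length (Gs N)) (Ls N)" using inv[of N] by simp
    fix i assume i: "i < m"
    show "i < length (Gs N) \<and> Gs N ! i = (unitv i, f i)"
      using zs0 i G_init_len[of m f] G_init_nth[OF i, of f] by (simp add: nth_append)
  next
    fix a b assume "a < length (Gs N)" "b < length (Gs N)" "snd (Gs N ! a) \<noteq> 0" "snd (Gs N ! b) \<noteq> 0"
      "cp_regular ordR ordM m (Gs N) a b"
    then show "(\<exists>k'<length (Gs N). Ls N k' a \<and> term_dvd (lpp_v ordM m (fst (Gs N ! k'))) (cp_sig ordR ordM m (Gs N) a b)) \<or>
       (\<exists>k'<length (Gs N). Ls N k' b \<and> term_dvd (lpp_v ordM m (fst (Gs N ! k'))) (cp_sig ordR ordM m (Gs N) b a))"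
      by (rule pair_prop)
  qed
  then show ?thesis using core.SGB lst by metis
qed

end

theorem theorem1:
  fixes ordR :: "('v::finite) pp \<Rightarrow> 'v pp \<Rightarrow> bool"
    and ordM :: "'v pp \<times> nat \<Rightarrow> 'v pp \<times> nat \<Rightarrow> bool"
    and m :: nat
    and f :: "nat \<Rightarrow> ('v, 'a::field) mpoly"
    and ss :: "('v, 'a) gstate list"
    and cps :: "(nat \<times> nat) list"
  assumes "term_order ordR"
    and "module_term_order m ordM"
    and "gbgc_run ordR ordM m f ss cps"
    and "gbgc_admissible ordR ordM m ss cps"
  shows "is_SGB ordR ordM m f (set (gG (last ss)))"
proof -
  interpret runl ordR ordM m f ss cps
    using assms by (simp add: runl_def runl_axioms_def sgb_def)
  show ?thesis by (rule final)
qed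


end
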